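(* Let $n\ge 1$, $t\ge 0$, $\ell\ge 1$ be integers with $n\ge 3t+1$. The adapted COOL protocol described in the context solves Byzantine broadcast on $\ell$-bit messages error-free: in every execution, against every adversary (of unbounded computational power, with no cryptographic assumptions) controlling at most $t$ processors (possibly including the leader), it satisfies termination, consistency and broadcast validity. Moreover it uses $O(t)$ rounds and a total of $O(\max\{n\ell,\ nt\log t\})$ communicated bits.
   Context: Setting. There are $n$ processors indexed by $[1:n]$; every two are joined by a reliable private channel, communication is synchronous (in rounds), and each recipient knows the sender of every message. At most $t$ processors are dishonest, controlled by a Byzantine adversary of unbounded computational power that knows everything and may make them deviate arbitrarily (missing values are replaced by a fixed default). One designated processor, the leader, holds an $\ell$-bit message $\boldsymbol M$. $\phi$ denotes a default value different from every $\ell$-bit message. Logarithms are base 2. Byzantine broadcast requirements: termination (every honest processor eventually outputs a message and terminates), consistency (all honest processors output the same message), validity (if the leader is honest, every honest processor outputs $\boldsymbol M$). Error-free means these hold in every execution. Adapted COOL: in a first round the leader sends an $\ell$-bit message to every processor (an honest leader sends $\boldsymbol M$); each processor $i$ takes the message received (a fixed default if none) as its initial message $\boldsymbol w_i$; then all processors run COOL, described next. Code. Let $k=\lfloor t/5\rfloor+1$ and $c=\lceil \max\{\ell,(t/5+1)\log(n+1)\}/k\rceil$ (so $n\le 2^c-1$). Messages are zero-padded to $kc$ bits and regarded as vectors in $GF(2^c)^k$. Integers in $[1:n]$ are identified with distinct nonzero elements of $GF(2^c)$, and $\boldsymbol h_i\in GF(2^c)^k$ has entries $h_{i,j}=\prod_{p\in[1:k],\,p\ne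 j}\frac{i-p}{j-p}$ computed in $GF(2^c)$. Core protocol (all $n$ processors; honest processor $i$). Initialization: $\boldsymbol w^{(i)}:=\boldsymbol w_i$, $y^{(i)}_j:=\boldsymbol h_j^{\mathsf T}\boldsymbol w_i$, $u_i(i):=1$. Phase 1. (a) Send $(y^{(i)}_j,y^{(i)}_i)$ to each $j\ne i$. (b) For $j\ne i$, $u_i(j):=1$ if the pair received from $j$ equals $(y^{(i)}_i,y^{(i)}_j)$, else $0$. Set $s_i:=1$ if $\sum_j u_i(j)\ge n-t$; otherwise $s_i:=0$ and $\boldsymbol w^{(i)}:=\phi$. (c) Send $s_i$ to all; each processor records the indicator received from each $j$ (its own for itself) and forms $\mathcal S_1=\{j:s_j=1\}$, $\mathcal S_0=\{j:s_j=0\}$. Phase 2. If $s_i=1$: set $u_i(j):=0$ for $j\in\mathcal S_0$; if now $\sum_j u_i(j)<n-t$, set $s_i:=0$, $\boldsymbol w^{(i)}:=\phi$, send $s_i=0$ to all. Everyone updates recorded indicators and $\mathcal S_0,\mathcal S_1$. Phase 3. Repeat Phase 2 once more. Vote $v_i:=1$ if recorded $\sum_j s_j\ge 2t+1$, else $0$. Run on the votes a deterministic error-free binary Byzantine agreement protocol for $t<n/3$ with $O(nt)$ bits and $O(t)$ rounds (e.g. Berman–Garay–Perry or Coan–Welch). If the decision is $0$, output $\phi$ and stop. Phase 4 (decision 1). If $s_i=0$: replace $y^{(i)}_i$ by the most frequent first component of the Phase-1 pairs received from $j\in\mathcal S_1$; send it to every $j\in\mathcal S_0\setminus\{i\}$;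 with $z_i=y^{(i)}_i$, $z_j$ the value received in Phase 4 for $j\in\mathcal S_0\setminus\{i\}$, $z_j$ the second component of the Phase-1 pair for $j\in\mathcal S_1$, set $\boldsymbol w^{(i)}$ to a message $\boldsymbol x$ with $\boldsymbol h_j^{\mathsf T}\boldsymbol x=z_j$ for at least $n-t$ indices ($\phi$ if none). If $s_i=1$, keep $\boldsymbol w^{(i)}$. Output $\boldsymbol w^{(i)}$. COOL in general: if $n\le Ct$ for a fixed constant $C$, COOL is the core protocol; otherwise the processors of $Q=[1:3t+1]$ run the core protocol among themselves (with $n$ replaced by $n'=3t+1$), then each $i\in Q$ sends $\boldsymbol h_i^{\mathsf T}\boldsymbol w^{(i)}$ of its output (a marker if $\phi$) to every processor outside $Q$, which outputs the message consistent with the values of at least $n'-t$ processors of $Q$ (or $\phi$ on at least $n'-t$ markers). *)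

theory Defs
  imports Complex_Main "HOL-Algebra.Ring" "HOL-Algebra.FiniteProduct"
begin

text \<open>A family of concrete representations of GF(2^c), one for every c \<ge> 1:
  gf G c is a field with 2^c elements, sym G c is a bijection between c-bit strings
  and the field elements (used to regard a zero-padded message as a vector in GF(2^c)^k),
  and pt G c identifies the integers 1..2^c-1 with distinct nonzero field elements.\<close>

record 'a gf_data =
  gf  :: "nat \<Rightarrow> 'a ring"
  sym :: "nat \<Rightarrow> bool list \<Rightarrow> 'a"
  pt  :: "nat \<Rightarrow> nat \<Rightarrow> 'a"

definition valid_gf :: "'a gf_data \<Rightarrow> bool" where
  "valid_gf G \<longleftrightarrow> (\<forall>c\<ge>1. field (gf G c) \<and> card (carrier (gf G c)) = 2 ^ c
     \<and> bij_betw (sym G c) {xs. length xs = c} (carrier (gf G c))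
     \<and> inj_on (pt G c) {1..2 ^ c - 1}
     \<and> pt G c ` {1..2 ^ c - 1} \<subseteq> carrier (gf G c) - {zero (gf G c)})"

definition kpar :: "nat \<Rightarrow> nat" where
  "kpar t = t div 5 + 1"

definition cpar :: "nat \<Rightarrow> nat \<Rightarrow> nat \<Rightarrow> nat" where
  "cpar m t l = nat \<lceil>max (real l) ((real t / 5 + 1) * log 2 (real m + 1)) / real (kpar t)\<rceil>"

definition hco :: "'a gf_data \<Rightarrow> nat \<Rightarrow> nat \<Rightarrow> nat \<Rightarrow> nat \<Rightarrow> 'a" where
  "hco G c k i j = finprod (gf G c)
     (\<lambda>p. mult (gf G c) (a_minus (gf G c) (pt G c i) (pt G c p))
                         (m_inv (gf G c) (a_minus (gf G c) (pt G c j) (pt G c p))))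
     ({1..k} - {j})"

definition evalc :: "'a gf_data \<Rightarrow> nat \<Rightarrow> nat \<Rightarrow> nat \<Rightarrow> (nat \<Rightarrow> 'a) \<Rightarrow> 'a" where
  "evalc G c k i x = finsum (gf G c) (\<lambda>j. mult (gf G c) (hco G c k i j) (x j)) {1..k}"

definition encm :: "'a gf_data \<Rightarrow> nat \<Rightarrow> nat \<Rightarrow> bool list \<Rightarrow> nat \<Rightarrow> 'a" where
  "encm G c k x = (\<lambda>j. sym G c (take c (drop ((j - 1) * c) (x @ replicate (k * c - length x) False))))"

definition sanit :: "'a ring \<Rightarrow> 'a \<Rightarrow> 'a" where
  "sanit R v = (if v \<in> carrier R then v else zero R)"

text \<open>All values sent by dishonest processors in an execution (the adversary may choose them
  adaptively; since honest processors are deterministic, quantifying over all such value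
  assignments covers all executions).  Malformed values are replaced by fixed defaults.
  ba_choice is the decision of the binary Byzantine agreement in the case where the honest
  votes are not unanimous (when they are unanimous, the decision is forced by the validity
  of the BA protocol; agreement of BA means there is one common decision).\<close>

record 'a adversary =
  lead_msg :: "nat \<Rightarrow> bool list"           \<comment> \<open>message a dishonest leader sends to i\<close>
  ph1_pair :: "nat \<Rightarrow> nat \<Rightarrow> 'a \<times> 'a"   \<comment> \<open>ph1_pair j i: Phase 1 pair sent by j to i\<close>
  ph1_ind  :: "nat \<Rightarrow> nat \<Rightarrow> bool"      \<comment> \<open>indicator s_j sent by j to i\<close>
  ph2_zero :: "nat \<Rightarrow> nat \<Rightarrow> bool"      \<comment> \<open>j sends s_j = 0 to i in Phase 2\<close>
  ph3_zero :: "nat \<Rightarrow> nat \<Rightarrow> bool"      \<comment> \<open>j sends s_j = 0 to i in Phase 3\<close>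
  ba_choice :: bool
  ph4_val  :: "nat \<Rightarrow> nat \<Rightarrow> 'a"        \<comment> \<open>Phase 4 value sent by j to i\<close>
  fin_val  :: "nat \<Rightarrow> nat \<Rightarrow> 'a option" \<comment> \<open>value (None = marker) sent by j in Q to i outside Q\<close>

text \<open>H is the set of honest processors, w0 i the initial message of processor i.
  Outputs: Some x for a message x, None for phi.\<close>

locale cool_core =
  fixes G :: "'a gf_data" and m t l :: nat and H :: "nat set"
    and w0 :: "nat \<Rightarrow> bool list" and A :: "'a adversary"
begin

definition "Pr = {1..m}"
definition "k = kpar t"
definition "c = cpar m t l"
definition "R = gf G c"

definition y :: "nat \<Rightarrow> nat \<Rightarrow> 'a" where
  "y i j = evalc G c k j (encm G c k (w0 i))"

definition pair1 :: "nat \<Rightarrow> nat \<Rightarrow> 'a \<times> 'a" where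
  "pair1 i j = (if j \<in> H then (y j i, y j j)
               else (sanit R (fst (ph1_pair A j i)), sanit R (snd (ph1_pair A j i))))"

definition u1 :: "nat \<Rightarrow> nat \<Rightarrow> bool" where
  "u1 i j = (j = i \<or> pair1 i j = (y i i, y i j))"

definition s1 :: "nat \<Rightarrow> bool" where
  "s1 i = (card {j \<in> Pr. u1 i j} \<ge> m - t)"

definition rec1 :: "nat \<Rightarrow> nat \<Rightarrow> bool" where
  "rec1 i j = (if j = i then s1 i else if j \<in> H then s1 j else ph1_ind A j i)"

definition u2 :: "nat \<Rightarrow> nat \<Rightarrow> bool" where
  "u2 i j = (u1 i j \<and> rec1 i j)"

definition s2 :: "nat \<Rightarrow> bool" where
  "s2 i = (s1 i \<and> card {j \<in> Pr. u2 i j} \<ge> m - t)"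

definition note2 :: "nat \<Rightarrow> nat \<Rightarrow> bool" where  \<comment> \<open>j notifies i of s_j = 0 in Phase 2\<close>
  "note2 j i = (if j \<in> H then s1 j \<and> \<not> s2 j else ph2_zero A j i)"

definition rec2 :: "nat \<Rightarrow> nat \<Rightarrow> bool" where
  "rec2 i j = (if j = i then s2 i else rec1 i j \<and> \<not> note2 j i)"

definition u3 :: "nat \<Rightarrow> nat \<Rightarrow> bool" where
  "u3 i j = (u2 i j \<and> rec2 i j)"

definition s3 :: "nat \<Rightarrow> bool" where
  "s3 i = (s2 i \<and> card {j \<in> Pr. u3 i j} \<ge> m - t)"

definition note3 :: "nat \<Rightarrow> nat \<Rightarrow> bool" where
  "note3 j i = (if j \<in> H then s2 j \<and> \<not> s3 j else ph3_zero A j i)"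

definition rec3 :: "nat \<Rightarrow> nat \<Rightarrow> bool" where
  "rec3 i j = (if j = i then s3 i else rec2 i j \<and> \<not> note3 j i)"

definition vote :: "nat \<Rightarrow> bool" where
  "vote i = (card {j \<in> Pr. rec3 i j} \<ge> 2 * t + 1)"

definition decision :: bool where
  "decision = (if \<forall>i \<in> H \<inter> Pr. vote i then True
               else if \<forall>i \<in> H \<inter> Pr. \<not> vote i then False else ba_choice A)"

definition S1 :: "nat \<Rightarrow> nat set" where "S1 i = {j \<in> Pr. rec3 i j}"
definition S0 :: "nat \<Rightarrow> nat set" where "S0 i = {j \<in> Pr. \<not> rec3 i j}"

definition maj :: "nat \<Rightarrow> 'a" where
  "maj i = (SOME v. v \<in> carrier R \<and>
      (\<forall>v'. card {j \<in> S1 i. fst (pair1 i j) = v'} \<le> card {j \<in> S1 i. fst (pair1 i j) = v}))"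

definition ph4 :: "nat \<Rightarrow> nat \<Rightarrow> 'a" where
  "ph4 i j = (if j \<in> H then (if \<not> s3 j \<and> i \<in> S0 j then maj j else zero R)
              else sanit R (ph4_val A j i))"

definition z :: "nat \<Rightarrow> nat \<Rightarrow> 'a" where
  "z i j = (if j = i then maj i else if j \<in> S0 i then ph4 i j else snd (pair1 i j))"

definition Msgs :: "bool list set" where "Msgs = {x. length x = l}"

definition consistent :: "nat \<Rightarrow> bool list \<Rightarrow> bool" where
  "consistent i x = (card {j \<in> Pr. evalc G c k j (encm G c k x) = z i j} \<ge> m - t)"

definition decode :: "nat \<Rightarrow> bool list option" where
  "decode i = (if \<exists>x \<in> Msgs. consistent i x
               then Some (SOME x. x \<in> Msgs \<and> consistent i x) else None)"

definition out :: "nat \<Rightarrow> bool list option" where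
  "out i = (if \<not> decision then None else if s3 i then Some (w0 i) else decode i)"

text \<open>Bits sent by honest processors (excluding the binary BA sub-protocol).\<close>
definition bits :: nat where
  "bits = (\<Sum>i \<in> H \<inter> Pr. 2 * c * (m - 1) + (m - 1)
          + (if s1 i \<and> \<not> s2 i then m - 1 else 0)
          + (if s2 i \<and> \<not> s3 i then m - 1 else 0)
          + (if decision \<and> \<not> s3 i then c * card (S0 i - {i}) else 0))"

text \<open>Rounds (excluding the binary BA sub-protocol): Phase 1 (2 rounds), Phase 2, Phase 3,
  and Phase 4 if the decision is 1.\<close>
definition rounds :: nat where
  "rounds = 4 + (if decision then 1 else 0)"

end

definition honest :: "nat \<Rightarrow> nat set \<Rightarrow> nat set" where
  "honest n B = {1..n} - B"

definition init_msg :: "nat \<Rightarrow> nat \<Rightarrow> bool list \<Rightarrow> nat set \<Rightarrow> 'a adversary \<Rightarrow> nat \<Rightarrow> bool list" where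
  "init_msg l L M B A i = (if L \<notin> B then M
      else if length (lead_msg A i) = l then lead_msg A i else replicate l False)"

definition small_case :: "real \<Rightarrow> nat \<Rightarrow> nat \<Rightarrow> bool" where
  "small_case C n t \<longleftrightarrow> real n \<le> C * real t"

definition core_size :: "real \<Rightarrow> nat \<Rightarrow> nat \<Rightarrow> nat" where
  "core_size C n t = (if small_case C n t then n else 3 * t + 1)"

definition cool_out :: "'a gf_data \<Rightarrow> real \<Rightarrow> nat \<Rightarrow> nat \<Rightarrow> nat \<Rightarrow> nat \<Rightarrow> bool list
    \<Rightarrow> nat set \<Rightarrow> 'a adversary \<Rightarrow> nat \<Rightarrow> bool list option" where
  "cool_out G C n t l L M B A i =
     (let m = core_size C n t; w = init_msg l L M B A;
          n' = 3 * t + 1; c' = cpar n' t l; k = kpar t;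
          r = (\<lambda>p. if p \<in> honest n B
                    then map_option (\<lambda>x. evalc G c' k p (encm G c' k x))
                           (cool_core.out G m t l (honest n B) w A p)
                    else map_option (sanit (gf G c')) (fin_val A p i));
          ok = (\<lambda>x. card {p \<in> {1..n'}. r p = Some (evalc G c' k p (encm G c' k x))} \<ge> n' - t)
      in if i \<le> m then cool_core.out G m t l (honest n B) w A i
         else if \<exists>x. length x = l \<and> ok x then Some (SOME x. length x = l \<and> ok x) else None)"

definition cool_rounds :: "(nat \<Rightarrow> nat \<Rightarrow> nat) \<Rightarrow> 'a gf_data \<Rightarrow> real \<Rightarrow> nat \<Rightarrow> nat \<Rightarrow> nat
    \<Rightarrow> nat \<Rightarrow> bool list \<Rightarrow> nat set \<Rightarrow> 'a adversary \<Rightarrow> nat" where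
  "cool_rounds ba_rounds G C n t l L M B A =
     (let m = core_size C n t in
      1 + cool_core.rounds G m t l (honest n B) (init_msg l L M B A) A + ba_rounds m t
        + (if small_case C n t then 0 else 1))"

definition cool_bits :: "(nat \<Rightarrow> nat \<Rightarrow> nat) \<Rightarrow> 'a gf_data \<Rightarrow> real \<Rightarrow> nat \<Rightarrow> nat \<Rightarrow> nat
    \<Rightarrow> nat \<Rightarrow> bool list \<Rightarrow> nat set \<Rightarrow> 'a adversary \<Rightarrow> nat" where
  "cool_bits ba_bits G C n t l L M B A =
     (let m = core_size C n t in
      (if L \<notin> B then l * (n - 1) else 0)
      + cool_core.bits G m t l (honest n B) (init_msg l L M B A) A + ba_bits m t
      + (if small_case C n t then 0
         else card (honest n B \<inter> {1..m}) * (cpar m t l + 1) * (n - m)))"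

end

theory Submission
  imports Defs
begin

fun pf :: "('a, 'b) ring_scheme \<Rightarrow> nat \<Rightarrow> ('a \<Rightarrow> 'a) \<Rightarrow> bool" where
  "pf R 0 f = (\<forall>x\<in>carrier R. f x = \<zero>\<^bsub>R\<^esub>)"
| "pf R (Suc k) f = (\<exists>g b. pf R k g \<and> b \<in> carrier R \<and>
      (\<forall>x\<in>carrier R. f x = x \<otimes>\<^bsub>R\<^esub> g x \<oplus>\<^bsub>R\<^esub> b))"

context cring begin

lemma pf_carrier: "pf R k f \<Longrightarrow> x \<in> carrier R \<Longrightarrow> f x \<in> carrier R"
proof (induction k arbitrary: f)
  case 0 then show ?case by simp
next
  case (Suc k)
  then obtain g b where "pf R k g" "b \<in> carrier R" "\<forall>x\<in>carrier R. f x = x \<otimes> g x \<oplus> b" by auto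
  with Suc show ?case by simp
qed

lemma pf_cong: "pf R k f \<Longrightarrow> (\<And>x. x \<in> carrier R \<Longrightarrow> f' x = f x) \<Longrightarrow> pf R k f'"
  by (cases k) auto

lemma pf_zero: "pf R k (\<lambda>x. \<zero>)"
proof (induction k)
  case 0 then show ?case by simp
next
  case (Suc k) then show ?case by (auto intro!: exI[of _ "\<lambda>x. \<zero>"] exI[of _ \<zero>])
qed

lemma pf_mono: "pf R k f \<Longrightarrow> pf R (Suc k) f"
proof (induction k arbitrary: f)
  case 0 then show ?case by (auto intro!: exI[of _ "\<lambda>x. \<zero>"] exI[of _ \<zero>])
next
  case (Suc k)
  then obtain g b where "pf R k g" "b \<in> carrier R" "\<forall>x\<in>carrier R. f x = x \<otimes> g x \<oplus> b" by auto
  with Suc.IH have "pf R (Suc k) g" "b \<in> carrier R" "\<forall>x\<in>carrier R. f x = x \<otimes> g x \<oplus> b" by auto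
  then show ?case by (subst pf.simps(2)) blast
qed

lemma pf_const: "b \<in> carrier R \<Longrightarrow> pf R (Suc k) (\<lambda>x. b)"
  using pf_zero[of k] by (auto intro!: exI[of _ "\<lambda>x. \<zero>"] exI[of _ b])

lemma pf_add: "pf R k f \<Longrightarrow> pf R k g \<Longrightarrow> pf R k (\<lambda>x. f x \<oplus> g x)"
proof (induction k arbitrary: f g)
  case 0 then show ?case by simp
next
  case (Suc k)
  from Suc.prems(1) obtain g1 b1 where 1: "pf R k g1" "b1 \<in> carrier R" "\<forall>x\<in>carrier R. f x = x \<otimes> g1 x \<oplus> b1" by auto
  from Suc.prems(2) obtain g2 b2 where 2: "pf R k g2" "b2 \<in> carrier R" "\<forall>x\<in>carrier R. g x = x \<otimes> g2 x \<oplus> b2" by auto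
  have "pf R k (\<lambda>x. g1 x \<oplus> g2 x)" using Suc.IH 1 2 by blast
  moreover have "\<forall>x\<in>carrier R. f x \<oplus> g x = x \<otimes> (g1 x \<oplus> g2 x) \<oplus> (b1 \<oplus> b2)"
  proof
    fix x assume x: "x \<in> carrier R"
    have "g1 x \<in> carrier R" "g2 x \<in> carrier R" using 1 2 x pf_carrier by auto
    then show "f x \<oplus> g x = x \<otimes> (g1 x \<oplus> g2 x) \<oplus> (b1 \<oplus> b2)"
      unfolding 1(3)[rule_format, OF x] 2(3)[rule_format, OF x] using 1 2 x by algebra
  qed
  ultimately show ?case using 1 2 by (auto intro!: exI[of _ "\<lambda>x. g1 x \<oplus> g2 x"])
qed

lemma pf_smult: "c \<in> carrier R \<Longrightarrow> pf R k f \<Longrightarrow> pf R k (\<lambda>x. c \<otimes> f x)"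
proof (induction k arbitrary: f)
  case 0 then show ?case by simp
next
  case (Suc k)
  from Suc.prems(2) obtain g1 b1 where 1: "pf R k g1" "b1 \<in> carrier R" "\<forall>x\<in>carrier R. f x = x \<otimes> g1 x \<oplus> b1" by auto
  have "pf R k (\<lambda>x. c \<otimes> g1 x)" using Suc 1 by blast
  moreover have "\<forall>x\<in>carrier R. c \<otimes> f x = x \<otimes> (c \<otimes> g1 x) \<oplus> (c \<otimes> b1)"
  proof
    fix x assume x: "x \<in> carrier R"
    have "g1 x \<in> carrier R" using 1 x pf_carrier by auto
    then show "c \<otimes> f x = x \<otimes> (c \<otimes> g1 x) \<oplus> (c \<otimes> b1)"
      unfolding 1(3)[rule_format, OF x] using 1 x Suc.prems by algebra
  qed
  ultimately show ?case using 1 Suc.prems by (auto intro!: exI[of _ "\<lambda>x. c \<otimes> g1 x"])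
qed

lemma pf_linmul: "r \<in> carrier R \<Longrightarrow> pf R k g \<Longrightarrow> pf R (Suc k) (\<lambda>x. (x \<ominus> r) \<otimes> g x)"
proof (induction k arbitrary: g)
  case 0 then show ?case by (auto intro!: exI[of _ "\<lambda>x. \<zero>"] exI[of _ \<zero>])
next
  case (Suc k)
  from Suc.prems(2) obtain g1 b1 where 1: "pf R k g1" "b1 \<in> carrier R" "\<forall>x\<in>carrier R. g x = x \<otimes> g1 x \<oplus> b1" by auto
  have "pf R (Suc k) (\<lambda>x. (x \<ominus> r) \<otimes> g1 x)" using Suc 1 by blast
  then have h: "pf R (Suc k) (\<lambda>x. (x \<ominus> r) \<otimes> g1 x \<oplus> b1)" using pf_add pf_const 1 by blast
  have "\<forall>x\<in>carrier R. (x \<ominus> r) \<otimes> g x = x \<otimes> ((x \<ominus> r) \<otimes> g1 x \<oplus> b1) \<oplus> (\<ominus> (r \<otimes> b1))"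
  proof
    fix x assume x: "x \<in> carrier R"
    have "g1 x \<in> carrier R" using 1 x pf_carrier by auto
    then show "(x \<ominus> r) \<otimes> g x = x \<otimes> ((x \<ominus> r) \<otimes> g1 x \<oplus> b1) \<oplus> (\<ominus> (r \<otimes> b1))"
      unfolding 1(3)[rule_format, OF x] using 1 x Suc.prems by algebra
  qed
  moreover have "\<ominus> (r \<otimes> b1) \<in> carrier R" using 1 Suc.prems by simp
  ultimately show ?case using h by (subst pf.simps(2)) blast
qed

lemma pf_factor: "pf R (Suc k) f \<Longrightarrow> r \<in> carrier R \<Longrightarrow> f r = \<zero> \<Longrightarrow>
   \<exists>g. pf R k g \<and> (\<forall>x\<in>carrier R. f x = (x \<ominus> r) \<otimes> g x)"
proof (induction k arbitrary: f)
  case 0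
  obtain g b where 1: "pf R 0 g" "b \<in> carrier R" "\<forall>x\<in>carrier R. f x = x \<otimes> g x \<oplus> b"
    using 0(1) pf.simps(2)[of R 0 f] by blast
  have fr: "f r = r \<otimes> g r \<oplus> b" using 1 0 by blast
  have "g r = \<zero>" using 1 0 by simp
  then have "b = \<zero>" using fr 0 1 by simp
  then have "\<forall>x\<in>carrier R. f x = (x \<ominus> r) \<otimes> \<zero>" using 1 0 by simp
  then show ?case by (auto intro!: exI[of _ "\<lambda>x. \<zero>"])
next
  case (Suc k)
  then obtain g b where 1: "pf R (Suc k) g" "b \<in> carrier R" "\<forall>x\<in>carrier R. f x = x \<otimes> g x \<oplus> b"
    by (meson pf.simps(2))
  have gr: "g r \<in> carrier R" using 1 Suc.prems pf_carrier by auto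
  have "pf R (Suc k) (\<lambda>x. g x \<oplus> (\<ominus> g r))" using pf_add pf_const 1 gr by blast
  moreover have "g r \<oplus> (\<ominus> g r) = \<zero>" using gr by algebra
  ultimately obtain h where h: "pf R k h" "\<forall>x\<in>carrier R. g x \<oplus> (\<ominus> g r) = (x \<ominus> r) \<otimes> h x"
    using Suc.IH Suc.prems by blast
  have b: "b = \<ominus> (r \<otimes> g r)"
  proof -
    have "r \<otimes> g r \<oplus> b = \<zero>" using 1 Suc.prems by auto
    then have "b \<oplus> r \<otimes> g r = \<zero>" using gr 1 Suc.prems by (simp add: add.m_comm)
    then show ?thesis using gr 1 Suc.prems by (simp add: minus_equality)
  qed
  have "\<forall>x\<in>carrier R. f x = (x \<ominus> r) \<otimes> (x \<otimes> h x \<oplus> g r)"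
  proof
    fix x assume x: "x \<in> carrier R"
    have hx: "h x \<in> carrier R" "g x \<in> carrier R" using h 1 x pf_carrier by auto
    have "g x = (g x \<oplus> \<ominus> g r) \<oplus> g r" using hx gr by algebra
    then have e: "g x = (x \<ominus> r) \<otimes> h x \<oplus> g r" using h(2) x by simp
    show "f x = (x \<ominus> r) \<otimes> (x \<otimes> h x \<oplus> g r)" unfolding 1(3)[rule_format, OF x] e b
      using hx gr x Suc.prems by algebra
  qed
  moreover have "pf R (Suc k) (\<lambda>x. x \<otimes> h x \<oplus> g r)" using h gr by auto
  ultimately show ?case by blast
qed

lemma minus_zero_eq: "a \<in> carrier R \<Longrightarrow> b \<in> carrier R \<Longrightarrow> a \<ominus> b = \<zero> \<Longrightarrow> a = b"
proof -
  assume a: "a \<in> carrier R" and b: "b \<in> carrier R" and e: "a \<ominus> b = \<zero>"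
  have "a = (a \<ominus> b) \<oplus> b" using a b by algebra
  then show "a = b" using e b by simp
qed

lemma pf_prod: "finite P \<Longrightarrow> (\<And>p. p \<in> P \<Longrightarrow> a p \<in> carrier R) \<Longrightarrow> (\<And>p. p \<in> P \<Longrightarrow> c p \<in> carrier R)
   \<Longrightarrow> pf R (Suc (card P)) (\<lambda>x. \<Otimes>p\<in>P. (x \<ominus> a p) \<otimes> c p)"
proof (induction P rule: finite_induct)
  case empty then show ?case using pf_const[of \<one> 0] by simp
next
  case (insert p P)
  have IH: "pf R (Suc (card P)) (\<lambda>x. \<Otimes>q\<in>P. (x \<ominus> a q) \<otimes> c q)" using insert by auto
  have "pf R (Suc (Suc (card P))) (\<lambda>x. (x \<ominus> a p) \<otimes> (c p \<otimes> (\<Otimes>q\<in>P. (x \<ominus> a q) \<otimes> c q)))"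
    using pf_linmul[OF _ pf_smult[OF _ IH]] insert.prems by simp
  moreover have "(\<Otimes>q\<in>insert p P. (x \<ominus> a q) \<otimes> c q) = (x \<ominus> a p) \<otimes> (c p \<otimes> (\<Otimes>q\<in>P. (x \<ominus> a q) \<otimes> c q))"
    if x: "x \<in> carrier R" for x
  proof -
    have "(\<Otimes>q\<in>insert p P. (x \<ominus> a q) \<otimes> c q) = ((x \<ominus> a p) \<otimes> c p) \<otimes> (\<Otimes>q\<in>P. (x \<ominus> a q) \<otimes> c q)"
      using insert x by (intro finprod_insert) auto
    also have "\<dots> = (x \<ominus> a p) \<otimes> (c p \<otimes> (\<Otimes>q\<in>P. (x \<ominus> a q) \<otimes> c q))"
      using insert x by (intro m_assoc) auto
    finally show ?thesis .
  qed
  ultimately show ?case using insert by (auto intro: pf_cong)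
qed

lemma pf_sum: "finite J \<Longrightarrow> (\<And>j. j \<in> J \<Longrightarrow> pf R k (F j)) \<Longrightarrow> pf R k (\<lambda>x. \<Oplus>j\<in>J. F j x)"
proof (induction J rule: finite_induct)
  case empty then show ?case using pf_zero by simp
next
  case (insert j J)
  have "pf R k (\<lambda>x. F j x \<oplus> (\<Oplus>i\<in>J. F i x))" using insert by (intro pf_add) auto
  moreover have "(\<Oplus>i\<in>insert j J. F i x) = F j x \<oplus> (\<Oplus>i\<in>J. F i x)" if x: "x \<in> carrier R" for x
    using insert x pf_carrier by (intro finsum_insert) auto
  ultimately show ?case by (auto intro: pf_cong)
qed

end

context domain begin

lemma pf_roots: "pf R k f \<Longrightarrow> finite S \<Longrightarrow> S \<subseteq> carrier R \<Longrightarrow> k \<le> card S \<Longrightarrow>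
   (\<forall>s\<in>S. f s = \<zero>) \<Longrightarrow> x \<in> carrier R \<Longrightarrow> f x = \<zero>"
proof (induction k arbitrary: f S)
  case 0 then show ?case by simp
next
  case (Suc k)
  then have "S \<noteq> {}" by auto
  then obtain r where r: "r \<in> S" by auto
  have rc: "r \<in> carrier R" using Suc r by auto
  obtain g where g: "pf R k g" "\<forall>x\<in>carrier R. f x = (x \<ominus> r) \<otimes> g x"
    using pf_factor[OF Suc.prems(1) rc] Suc.prems(5) r by auto
  have "\<forall>s\<in>S - {r}. g s = \<zero>"
  proof
    fix s assume s: "s \<in> S - {r}"
    then have sc: "s \<in> carrier R" using Suc by auto
    have gs: "g s \<in> carrier R" using g(1) sc pf_carrier by auto
    have "(s \<ominus> r) \<otimes> g s = \<zero>" using g(2) sc Suc.prems(5) s by auto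
    moreover have "s \<ominus> r \<noteq> \<zero>" using s sc rc minus_zero_eq by auto
    ultimately show "g s = \<zero>" using integral sc rc gs by (meson minus_closed)
  qed
  moreover have "k \<le> card (S - {r})" using Suc.prems r by auto
  ultimately have "g x = \<zero>" using Suc.IH[OF g(1), of "S - {r}"] Suc.prems by auto
  then show ?case using g(2) Suc.prems(6) rc by simp
qed

end


context field begin

lemma rs_unique:
  fixes pts :: "nat \<Rightarrow> 'a"
  assumes inj: "inj_on pts {1..N}" and ptc: "pts ` {1..N} \<subseteq> carrier R" and kN: "k \<le> N"
    and xc: "\<And>j. j \<in> {1..k} \<Longrightarrow> x j \<in> carrier R"
    and x'c: "\<And>j. j \<in> {1..k} \<Longrightarrow> x' j \<in> carrier R"
    and P: "P \<subseteq> {1..N}" "k \<le> card P"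
    and eq: "\<And>p. p \<in> P \<Longrightarrow>
       (\<Oplus>j\<in>{1..k}. (\<Otimes>q\<in>{1..k}-{j}. (pts p \<ominus> pts q) \<otimes> inv (pts j \<ominus> pts q)) \<otimes> x j)
     = (\<Oplus>j\<in>{1..k}. (\<Otimes>q\<in>{1..k}-{j}. (pts p \<ominus> pts q) \<otimes> inv (pts j \<ominus> pts q)) \<otimes> x' j)"
    and j0: "j0 \<in> {1..k}"
  shows "x j0 = x' j0"
proof -
  define L where "L j y = (\<Otimes>q\<in>{1..k}-{j}. (y \<ominus> pts q) \<otimes> inv (pts j \<ominus> pts q))" for j y
  have ptk: "pts i \<in> carrier R" if "i \<in> {1..k}" for i using that ptc kN by auto
  have invc: "inv (pts j \<ominus> pts q) \<in> carrier R" "(pts j \<ominus> pts q) \<otimes> inv (pts j \<ominus> pts q) = \<one>"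
    if "j \<in> {1..k}" "q \<in> {1..k}" "q \<noteq> j" for j q
  proof -
    have "pts j \<noteq> pts q" using inj that kN by (auto dest: inj_onD)
    then have "pts j \<ominus> pts q \<noteq> \<zero>" using minus_zero_eq ptk that by blast
    then have "pts j \<ominus> pts q \<in> Units R" using field_Units ptk that by auto
    then show "inv (pts j \<ominus> pts q) \<in> carrier R" "(pts j \<ominus> pts q) \<otimes> inv (pts j \<ominus> pts q) = \<one>" by auto
  qed
  have pfL: "pf R k (L j)" if j: "j \<in> {1..k}" for j
  proof -
    have "card ({1..k} - {j}) = k - 1" using j by auto
    moreover have "Suc (k - 1) = k" using j by auto
    ultimately show ?thesis unfolding L_def
      using pf_prod[of "{1..k}-{j}" pts "\<lambda>q. inv (pts j \<ominus> pts q)"] invc(1)[OF j] ptk by auto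
  qed
  have Lc: "L j y \<in> carrier R" if "j \<in> {1..k}" "y \<in> carrier R" for j y
    using pfL pf_carrier that by blast
  define F where "F z y = (\<Oplus>j\<in>{1..k}. L j y \<otimes> z j)" for z y
  have pfF: "pf R k (F z)" if zc: "\<And>j. j \<in> {1..k} \<Longrightarrow> z j \<in> carrier R" for z
  proof -
    have "pf R k (\<lambda>y. L j y \<otimes> z j)" if j: "j \<in> {1..k}" for j
      using pf_smult[OF zc[OF j] pfL[OF j]] by (rule pf_cong) (use Lc j zc in \<open>simp add: m_comm\<close>)
    then show ?thesis unfolding F_def by (intro pf_sum) auto
  qed
  have Fc: "F z y \<in> carrier R" if "\<And>j. j \<in> {1..k} \<Longrightarrow> z j \<in> carrier R" "y \<in> carrier R" for z y
    using pfF pf_carrier that by blast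
  define D where "D y = F x y \<oplus> (\<ominus> \<one> \<otimes> F x' y)" for y
  have pfD: "pf R k D" unfolding D_def
    by (intro pf_add pf_smult pfF xc x'c) auto
  have Dz: "D y = \<zero>" if "y \<in> carrier R" for y
  proof (rule pf_roots[OF pfD])
    show "finite (pts ` P)" using P by (auto intro: finite_subset)
    show "pts ` P \<subseteq> carrier R" using P ptc by auto
    have "card (pts ` P) = card P" using inj P by (auto intro: card_image inj_on_subset)
    then show "k \<le> card (pts ` P)" using P by simp
    show "\<forall>s\<in>pts ` P. D s = \<zero>"
    proof
      fix s assume "s \<in> pts ` P"
      then obtain p where p: "p \<in> P" "s = pts p" by auto
      have sc: "s \<in> carrier R" using p P ptc by auto
      have "F x s = F x' s" using eq[OF p(1)] p unfolding F_def L_def by simp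
      moreover have "F x' s \<in> carrier R" using Fc x'c sc by blast
      ultimately show "D s = \<zero>" unfolding D_def by algebra
    qed
    show "y \<in> carrier R" by fact
  qed
  have Lpt: "L i (pts j0) = (if j0 = i then \<one> else \<zero>)" if i: "i \<in> {1..k}" for i
  proof (cases "j0 = i")
    case True
    have "(\<Otimes>q\<in>{1..k}-{i}. (pts i \<ominus> pts q) \<otimes> inv (pts i \<ominus> pts q)) = \<one>"
    proof (rule finprod_one_eqI)
      fix q assume q: "q \<in> {1..k}-{i}"
      then have "q \<in> {1..k}" "q \<noteq> i" by auto
      then show "(pts i \<ominus> pts q) \<otimes> inv (pts i \<ominus> pts q) = \<one>" using invc(2)[OF i] by blast
    qed
    then show ?thesis unfolding L_def using True by simp
  next
    case False
    have fin: "finite ({1..k} - {i} - {j0})" by auto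
    have "{1..k} - {i} = insert j0 ({1..k} - {i} - {j0})" using False j0 by auto
    then have "L i (pts j0) = ((pts j0 \<ominus> pts j0) \<otimes> inv (pts i \<ominus> pts j0)) \<otimes>
        (\<Otimes>q\<in>{1..k} - {i} - {j0}. (pts j0 \<ominus> pts q) \<otimes> inv (pts i \<ominus> pts q))"
      unfolding L_def using False j0 i invc ptk by (subst finprod_insert[symmetric]) (auto simp: Pi_def)
    also have "\<dots> = \<zero>" using False j0 i invc ptk by (auto simp: a_minus_def r_neg intro!: finprod_closed)
    finally show ?thesis using False by simp
  qed
  have Fpt: "F z (pts j0) = z j0" if zc: "\<And>j. j \<in> {1..k} \<Longrightarrow> z j \<in> carrier R" for z
  proof -
    have "F z (pts j0) = (\<Oplus>i\<in>{1..k}. if j0 = i then z i else \<zero>)"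
      unfolding F_def using Lpt zc by (intro finsum_cong') auto
    also have "\<dots> = z j0" using j0 zc by (intro finsum_singleton) auto
    finally show ?thesis .
  qed
  have "D (pts j0) = \<zero>" using Dz ptk j0 by blast
  then have "x j0 \<oplus> (\<ominus> \<one> \<otimes> x' j0) = \<zero>" unfolding D_def using Fpt xc x'c by simp
  moreover have "x j0 = (x j0 \<oplus> (\<ominus> \<one> \<otimes> x' j0)) \<oplus> x' j0" using xc x'c j0 by algebra
  ultimately show ?thesis using x'c j0 by simp
qed

end

lemma cpar_props:
  assumes l: "1 \<le> l"
  shows "1 \<le> cpar m t l" "l \<le> kpar t * cpar m t l" "m + 1 \<le> 2 ^ cpar m t l"
proof -
  define X where "X = max (real l) ((real t / 5 + 1) * log 2 (real m + 1))"
  define k where "k = kpar t"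
  have kpos: "real k > 0" unfolding k_def kpar_def by simp
  have kle: "real k \<le> real t / 5 + 1"
  proof -
    have "real (t div 5) \<le> real t / 5" by linarith
    then show ?thesis unfolding k_def kpar_def by simp
  qed
  have Xl: "X \<ge> real l" unfolding X_def by simp
  have Xpos: "X > 0" using Xl l by simp
  have c_eq: "cpar m t l = nat \<lceil>X / real k\<rceil>" unfolding cpar_def X_def k_def by simp
  have ceil_pos: "\<lceil>X / real k\<rceil> \<ge> 1" using Xpos kpos by (simp add: one_le_ceiling) 
  have rc: "real (cpar m t l) = of_int \<lceil>X / real k\<rceil>" using c_eq ceil_pos by simp
  have cge: "real (cpar m t l) \<ge> X / real k" using rc by simp
  then have kc: "real k * real (cpar m t l) \<ge> X" using kpos by (simp add: field_simps)
  show "1 \<le> cpar m t l" using c_eq nat_mono[OF ceil_pos] by simp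
  have "real l \<le> real (k * cpar m t l)" using kc Xl by simp
  then show "l \<le> kpar t * cpar m t l" unfolding k_def by linarith
  have "(real t / 5 + 1) * log 2 (real m + 1) \<le> X" unfolding X_def by simp
  also have "\<dots> \<le> real k * real (cpar m t l)" by (rule kc)
  also have "\<dots> \<le> (real t / 5 + 1) * real (cpar m t l)" using kle by (intro mult_right_mono) auto
  finally have A: "(real t / 5 + 1) * log 2 (real m + 1) \<le> (real t / 5 + 1) * real (cpar m t l)" .
  have pos: "real t / 5 + 1 > 0" by (simp add: add_pos_nonneg)
  from A have "log 2 (real m + 1) \<le> real (cpar m t l)"
    using mult_le_cancel_left_pos[OF pos] by blast
  then have B: "real m + 1 \<le> 2 powr real (cpar m t l)"
    using log_le_iff[of 2 "real m + 1"] by simp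
  have "2 powr real (cpar m t l) = real (2 ^ cpar m t l)" by (simp add: powr_realpow)
  then show "m + 1 \<le> 2 ^ cpar m t l" using B by linarith
qed

lemma chunk_eq:
  assumes "length xs = k * c" "length ys = k * c"
    and "\<And>j. j \<in> {1..k} \<Longrightarrow> take c (drop ((j - 1) * c) xs) = take c (drop ((j - 1) * c) ys)"
  shows "xs = ys"
proof (rule nth_equalityI)
  show "length xs = length ys" using assms by simp
  fix n assume n: "n < length xs"
  then have cpos: "c > 0" using assms by (cases c) auto
  define j where "j = n div c + 1"
  have "n div c < k" using n assms less_mult_imp_div_less[of n k c] by simp
  then have j: "j \<in> {1..k}" unfolding j_def by simp
  have jn: "(j - 1) * c + n mod c = n" unfolding j_def by simp
  have mc: "n mod c < c" using cpos by simp
  have le: "(j - 1) * c \<le> length xs" "(j - 1) * c \<le> length ys" using jn n assms by linarith+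
  have "xs ! n = xs ! ((j - 1) * c + n mod c)" using jn by simp
  also have "\<dots> = drop ((j - 1) * c) xs ! (n mod c)" using le by (simp add: nth_drop)
  also have "\<dots> = take c (drop ((j - 1) * c) xs) ! (n mod c)" using mc by (simp add: nth_take)
  also have "\<dots> = take c (drop ((j - 1) * c) ys) ! (n mod c)" using assms(3)[OF j] by simp
  also have "\<dots> = drop ((j - 1) * c) ys ! (n mod c)" using mc by (simp add: nth_take)
  also have "\<dots> = ys ! ((j - 1) * c + n mod c)" using le by (simp add: nth_drop)
  also have "\<dots> = ys ! n" using jn by simp
  finally show "xs ! n = ys ! n" .
qed

lemma len_chunk:
  assumes "j \<in> {1..k}" "length ys = k * c"
  shows "length (take c (drop ((j - 1) * c) ys)) = c"
proof -
  have "j * c \<le> k * c" using assms by simp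
  moreover have "(j - 1) * c + c = j * c" using assms by (cases j) auto
  ultimately have "c \<le> length ys - (j - 1) * c" using assms by linarith
  then show ?thesis by simp
qed

lemma gf_facts:
  assumes "valid_gf G" "1 \<le> c"
  shows "field (gf G c)" "bij_betw (sym G c) {xs. length xs = c} (carrier (gf G c))"
    "inj_on (pt G c) {1..2 ^ c - 1}" "pt G c ` {1..2 ^ c - 1} \<subseteq> carrier (gf G c)"
  using assms unfolding valid_gf_def by auto

lemma encm_carrier:
  assumes "valid_gf G" "1 \<le> c" "length x \<le> k * c" "j \<in> {1..k}"
  shows "encm G c k x j \<in> carrier (gf G c)"
proof -
  have "length (take c (drop ((j - 1) * c) (x @ replicate (k * c - length x) False))) = c"
    using assms(3,4) by (intro len_chunk) auto
  then have "sym G c (take c (drop ((j - 1) * c) (x @ replicate (k * c - length x) False))) \<in> carrier (gf G c)"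
    using bij_betw_apply[OF gf_facts(2)[OF assms(1,2)]] by simp
  then show ?thesis unfolding encm_def .
qed

lemma encm_inj:
  assumes "valid_gf G" "1 \<le> c" "length x = l" "length x' = l" "l \<le> k * c"
    and "\<And>j. j \<in> {1..k} \<Longrightarrow> encm G c k x j = encm G c k x' j"
  shows "x = x'"
proof -
  define px where "px = x @ replicate (k * c - l) False"
  define px' where "px' = x' @ replicate (k * c - l) False"
  have lp: "length px = k * c" "length px' = k * c" unfolding px_def px'_def using assms by auto
  have len: "length (take c (drop ((j - 1) * c) ys)) = c" if "j \<in> {1..k}" "length ys = k * c" for j ys
    using len_chunk that by blast
  have "px = px'"
  proof (rule chunk_eq[OF lp])
    fix j assume j: "j \<in> {1..k}"
    have "sym G c (take c (drop ((j - 1) * c) px)) = sym G c (take c (drop ((j - 1) * c) px'))"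
      using assms(6)[OF j] assms(3,4) unfolding encm_def px_def px'_def by simp
    moreover have "inj_on (sym G c) {xs. length xs = c}" using gf_facts(2)[OF assms(1,2)] bij_betw_def by blast
    ultimately show "take c (drop ((j - 1) * c) px) = take c (drop ((j - 1) * c) px')"
      using len[OF j lp(1)] len[OF j lp(2)] by (auto dest: inj_onD)
  qed
  then show ?thesis unfolding px_def px'_def using assms(3,4) by simp
qed

lemma evalc_carrier:
  assumes "valid_gf G" "1 \<le> c" "\<And>j. j \<in> {1..k} \<Longrightarrow> x j \<in> carrier (gf G c)"
    "\<And>j q. j \<in> {1..k} \<Longrightarrow> hco G c k i j \<in> carrier (gf G c)"
  shows "evalc G c k i x \<in> carrier (gf G c)"
proof -
  interpret F: field "gf G c" using gf_facts(1)[OF assms(1,2)] .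
  show ?thesis unfolding evalc_def using assms(3,4) by (intro F.finsum_closed) auto
qed

lemma hco_in:
  assumes "valid_gf G" "1 \<le> c" "k \<le> 2 ^ c - 1" "i \<in> {1..2 ^ c - 1}" "j \<in> {1..k}"
  shows "hco G c k i j \<in> carrier (gf G c)"
proof -
  interpret F: field "gf G c" using gf_facts(1)[OF assms(1,2)] .
  have inj: "inj_on (pt G c) {1..2 ^ c - 1}" and ptc: "pt G c ` {1..2 ^ c - 1} \<subseteq> carrier (gf G c)"
    using gf_facts[OF assms(1,2)] by auto
  have "(pt G c i \<ominus>\<^bsub>gf G c\<^esub> pt G c p) \<otimes>\<^bsub>gf G c\<^esub> inv\<^bsub>gf G c\<^esub> (pt G c j \<ominus>\<^bsub>gf G c\<^esub> pt G c p) \<in> carrier (gf G c)"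
    if p: "p \<in> {1..k} - {j}" for p
  proof -
    have pj: "p \<in> {1..2 ^ c - 1}" "j \<in> {1..2 ^ c - 1}" "p \<noteq> j" using p assms by auto
    then have "pt G c j \<noteq> pt G c p" using inj by (auto dest: inj_onD)
    moreover have "pt G c j \<in> carrier (gf G c)" "pt G c p \<in> carrier (gf G c)" "pt G c i \<in> carrier (gf G c)"
      using pj ptc assms(4) by auto
    ultimately have "pt G c j \<ominus>\<^bsub>gf G c\<^esub> pt G c p \<in> Units (gf G c)"
      using F.minus_zero_eq F.field_Units by auto
    then show ?thesis using \<open>pt G c i \<in> carrier (gf G c)\<close> \<open>pt G c p \<in> carrier (gf G c)\<close> by auto
  qed
  then show ?thesis unfolding hco_def by (intro F.finprod_closed) auto
qed

lemma evalc_in: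
  assumes "valid_gf G" "1 \<le> c" "k \<le> 2 ^ c - 1" "i \<in> {1..2 ^ c - 1}"
    "\<And>j. j \<in> {1..k} \<Longrightarrow> x j \<in> carrier (gf G c)"
  shows "evalc G c k i x \<in> carrier (gf G c)"
  by (rule evalc_carrier[OF assms(1,2)]) (use assms hco_in[OF assms(1-4)] in auto)

lemma rs_msg:
  assumes G: "valid_gf G" and l: "1 \<le> l" and len: "length x1 = l" "length x2 = l"
    and P: "P \<subseteq> {1..m}" "kpar t \<le> card P"
    and eq: "\<And>p. p \<in> P \<Longrightarrow> evalc G (cpar m t l) (kpar t) p (encm G (cpar m t l) (kpar t) x1)
                         = evalc G (cpar m t l) (kpar t) p (encm G (cpar m t l) (kpar t) x2)"
  shows "x1 = x2"
proof -
  define c where "c = cpar m t l"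
  define k where "k = kpar t"
  have c1: "1 \<le> c" and lkc: "l \<le> k * c" and mc: "m + 1 \<le> 2 ^ c"
    using cpar_props[OF l, where m=m and t=t] unfolding c_def k_def by auto
  interpret F: field "gf G c" using gf_facts(1)[OF G c1] .
  have inj: "inj_on (pt G c) {1..2 ^ c - 1}" and ptc: "pt G c ` {1..2 ^ c - 1} \<subseteq> carrier (gf G c)"
    using gf_facts[OF G c1] by auto
  have "card P \<le> m" using P card_mono[of "{1..m}" P] by simp
  then have kN: "k \<le> 2 ^ c - 1" using P mc unfolding k_def by linarith
  have PN: "P \<subseteq> {1..2 ^ c - 1}"
  proof
    fix x assume "x \<in> P" then have "1 \<le> x" "x \<le> m" using P by auto
    then show "x \<in> {1..2 ^ c - 1}" using mc by simp
  qed
  show ?thesis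
  proof (rule encm_inj[OF G c1 len lkc])
    fix j assume j: "j \<in> {1..k}"
    show "encm G c k x1 j = encm G c k x2 j"
    proof (rule F.rs_unique[OF inj ptc kN _ _ PN _ _ j])
      show "\<And>j. j \<in> {1..k} \<Longrightarrow> encm G c k x1 j \<in> carrier (gf G c)"
        using encm_carrier[OF G c1] len lkc by auto
      show "\<And>j. j \<in> {1..k} \<Longrightarrow> encm G c k x2 j \<in> carrier (gf G c)"
        using encm_carrier[OF G c1] len lkc by auto
      show "k \<le> card P" using P unfolding k_def by simp
      fix p assume "p \<in> P"
      then show "(\<Oplus>\<^bsub>gf G c\<^esub>j\<in>{1..k}. (\<Otimes>\<^bsub>gf G c\<^esub>q\<in>{1..k} - {j}. (pt G c p \<ominus>\<^bsub>gf G c\<^esub> pt G c q) \<otimes>\<^bsub>gf G c\<^esub> inv\<^bsub>gf G c\<^esub> (pt G c j \<ominus>\<^bsub>gf G c\<^esub> pt G c q)) \<otimes>\<^bsub>gf G c\<^esub> encm G c k x1 j) =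
         (\<Oplus>\<^bsub>gf G c\<^esub>j\<in>{1..k}. (\<Otimes>\<^bsub>gf G c\<^esub>q\<in>{1..k} - {j}. (pt G c p \<ominus>\<^bsub>gf G c\<^esub> pt G c q) \<otimes>\<^bsub>gf G c\<^esub> inv\<^bsub>gf G c\<^esub> (pt G c j \<ominus>\<^bsub>gf G c\<^esub> pt G c q)) \<otimes>\<^bsub>gf G c\<^esub> encm G c k x2 j)"
        using eq[of p] unfolding c_def k_def evalc_def hco_def by simp
    qed
  qed
qed

lemma card_union3:
  assumes "finite X" "finite Y" "finite Z"
  shows "card X + card Y + card Z \<le> card (X \<union> Y \<union> Z) + card (X \<inter> Y) + card (X \<inter> Z) + card (Y \<inter> Z)"
proof -
  have 1: "card (X \<union> Y) + card (X \<inter> Y) = card X + card Y" using assms card_Un_Int by metis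
  have 2: "card (X \<union> Y \<union> Z) + card ((X \<union> Y) \<inter> Z) = card (X \<union> Y) + card Z" using assms card_Un_Int
    by (metis finite_UnI)
  have "(X \<union> Y) \<inter> Z = (X \<inter> Z) \<union> (Y \<inter> Z)" by auto
  then have "card ((X \<union> Y) \<inter> Z) \<le> card (X \<inter> Z) + card (Y \<inter> Z)" by (metis card_Un_le)
  then show ?thesis using 1 2 by linarith
qed

locale cool_ok = cool_core +
  assumes valid: "valid_gf G" and mt: "3 * t + 1 \<le> m" and bad: "card ({1..m} - H) \<le> t"
    and l1: "1 \<le> l" and wl: "\<And>i. i \<in> H \<Longrightarrow> length (w0 i) = l"
begin

definition "Hp = H \<inter> Pr"
definition "D = Pr - H"
definition "agr i p = (y i p = y p p)"
definition "Agr i = {p \<in> Hp. agr i p}"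

lemma fin_Pr: "finite Pr" and card_Pr: "card Pr = m" unfolding Pr_def by auto

lemma fin_Hp: "finite Hp" and fin_D: "finite D" unfolding Hp_def D_def using fin_Pr by auto

lemma card_HD: "card Hp + card D = m"
proof -
  have "Hp \<union> D = Pr" "Hp \<inter> D = {}" unfolding Hp_def D_def by auto
  then show ?thesis using card_Un_disjoint[OF fin_Hp fin_D] card_Pr by simp
qed

lemma card_D: "card D \<le> t" using bad unfolding D_def Pr_def .

lemma card_Hp: "2 * t + 1 \<le> card Hp" using card_HD card_D mt by linarith

lemma count_split: "card {j \<in> Pr. Q j} \<le> card {j \<in> Hp. Q j} + card D"
proof -
  have "{j \<in> Pr. Q j} \<subseteq> {j \<in> Hp. Q j} \<union> D" unfolding Hp_def D_def by auto
  then have "card {j \<in> Pr. Q j} \<le> card ({j \<in> Hp. Q j} \<union> D)" using fin_Hp fin_D by (intro card_mono) auto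
  also have "\<dots> \<le> card {j \<in> Hp. Q j} + card D" by (rule card_Un_le)
  finally show ?thesis .
qed

lemma y_same: "w0 i = w0 j \<Longrightarrow> y i p = y j p" unfolding y_def by simp

lemma agr_same: "w0 i = w0 j \<Longrightarrow> agr i p = agr j p" unfolding agr_def y_def by simp

lemma agr_own: "w0 p = w0 i \<Longrightarrow> agr i p" unfolding agr_def y_def by simp

lemma u1_honest: "j \<in> H \<Longrightarrow> u1 i j = (agr i j \<and> agr j i)"
  unfolding u1_def pair1_def agr_def by auto

lemma rec1_h: "j \<in> H \<Longrightarrow> rec1 i j = s1 j" unfolding rec1_def by auto
lemma s2_s1: "s2 i \<Longrightarrow> s1 i" unfolding s2_def by auto
lemma s3_s2: "s3 i \<Longrightarrow> s2 i" unfolding s3_def by auto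
lemma rec2_h: "j \<in> H \<Longrightarrow> rec2 i j = s2 j" unfolding rec2_def note2_def using rec1_h s2_s1 by auto
lemma rec3_h: "j \<in> H \<Longrightarrow> rec3 i j = s3 j" unfolding rec3_def note3_def using rec2_h s3_s2 by auto

lemma th1: "s1 i \<Longrightarrow> m - t \<le> card {j \<in> Hp. u1 i j} + card D"
  unfolding s1_def using count_split[of "u1 i"] by linarith

lemma th2: "s2 i \<Longrightarrow> m - t \<le> card {j \<in> Hp. u1 i j \<and> s1 j} + card D"
proof -
  assume "s2 i"
  then have "m - t \<le> card {j \<in> Pr. u2 i j}" unfolding s2_def by auto
  also have "\<dots> \<le> card {j \<in> Hp. u2 i j} + card D" by (rule count_split)
  also have "{j \<in> Hp. u2 i j} = {j \<in> Hp. u1 i j \<and> s1 j}" unfolding u2_def Hp_def using rec1_h by auto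
  finally show ?thesis .
qed

lemma th3: "s3 i \<Longrightarrow> m - t \<le> card {j \<in> Hp. u1 i j \<and> s2 j} + card D"
proof -
  assume "s3 i"
  then have "m - t \<le> card {j \<in> Pr. u3 i j}" unfolding s3_def by auto
  also have "\<dots> \<le> card {j \<in> Hp. u3 i j} + card D" by (rule count_split)
  also have "{j \<in> Hp. u3 i j} = {j \<in> Hp. u1 i j \<and> s2 j}" unfolding u3_def u2_def Hp_def
    using rec1_h rec2_h s2_s1 by auto
  finally show ?thesis .
qed

lemma q_eq: "m - t - card D = card Hp - t" using card_HD by linarith

lemma Hp_H: "j \<in> Hp \<Longrightarrow> j \<in> H" and Hp_Pr: "j \<in> Hp \<Longrightarrow> j \<in> Pr" unfolding Hp_def by auto

lemma rsm: "i \<in> H \<Longrightarrow> j \<in> H \<Longrightarrow> P \<subseteq> Pr \<Longrightarrow> k \<le> card P \<Longrightarrow> (\<And>p. p \<in> P \<Longrightarrow> y i p = y j p) \<Longrightarrow> w0 i = w0 j"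
  using rs_msg[OF valid l1 wl wl, of i j P m t] unfolding y_def c_def k_def Pr_def by auto

lemma agr_int: "i \<in> H \<Longrightarrow> j \<in> H \<Longrightarrow> w0 i \<noteq> w0 j \<Longrightarrow> card (Agr i \<inter> Agr j) \<le> t div 5"
proof (rule ccontr)
  assume ij: "i \<in> H" "j \<in> H" "w0 i \<noteq> w0 j" and "\<not> card (Agr i \<inter> Agr j) \<le> t div 5"
  then have "k \<le> card (Agr i \<inter> Agr j)" unfolding k_def kpar_def by simp
  moreover have "Agr i \<inter> Agr j \<subseteq> Pr" unfolding Agr_def Hp_def by auto
  moreover have "y i p = y j p" if "p \<in> Agr i \<inter> Agr j" for p using that unfolding Agr_def agr_def by auto
  ultimately have "w0 i = w0 j" using rsm[OF ij(1,2)] by blast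
  then show False using ij by simp
qed

lemma u1_Agr: "i \<in> H \<Longrightarrow> {j \<in> Hp. u1 i j} \<subseteq> Agr i"
  unfolding Agr_def using u1_honest Hp_H by auto

lemma card_Agr: "i \<in> H \<Longrightarrow> s1 i \<Longrightarrow> card Hp - t \<le> card (Agr i)"
proof -
  assume i: "i \<in> H" "s1 i"
  have "card {j \<in> Hp. u1 i j} \<le> card (Agr i)" using u1_Agr[OF i(1)] fin_Hp unfolding Agr_def by (intro card_mono) auto
  then show ?thesis using th1[OF i(2)] q_eq by linarith
qed

lemma three_groups:
  assumes "a \<in> Hp" "b \<in> Hp" "e \<in> Hp" "s1 a" "s1 b" "s1 e"
    "w0 a \<noteq> w0 b" "w0 a \<noteq> w0 e" "w0 b \<noteq> w0 e"
  shows False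
proof -
  have H: "a \<in> H" "b \<in> H" "e \<in> H" using assms Hp_H by auto
  have fa: "finite (Agr x)" for x unfolding Agr_def using fin_Hp by auto
  have "card (Agr a \<union> Agr b \<union> Agr e) \<le> card Hp" using fin_Hp unfolding Agr_def by (intro card_mono) auto
  moreover have "card (Agr a) + card (Agr b) + card (Agr e) \<le> card (Agr a \<union> Agr b \<union> Agr e)
      + card (Agr a \<inter> Agr b) + card (Agr a \<inter> Agr e) + card (Agr b \<inter> Agr e)" by (rule card_union3[OF fa fa fa])
  moreover have "card (Agr a \<inter> Agr b) \<le> t div 5" "card (Agr a \<inter> Agr e) \<le> t div 5" "card (Agr b \<inter> Agr e) \<le> t div 5"
    using agr_int H assms by auto
  moreover have "card Hp - t \<le> card (Agr a)" "card Hp - t \<le> card (Agr b)" "card Hp - t \<le> card (Agr e)"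
    using card_Agr H assms by auto
  moreover have "5 * (t div 5) \<le> t" by simp
  ultimately show False using card_Hp by linarith
qed

lemma big_group:
  assumes i: "i \<in> Hp" "s3 i" and i': "i' \<in> Hp" "w0 i \<noteq> w0 i'"
    and two: "\<And>j. j \<in> Hp \<Longrightarrow> s1 j \<Longrightarrow> w0 j = w0 i \<or> w0 j = w0 i'"
  shows "card Hp - t \<le> card {j \<in> Hp. w0 j = w0 i}"
proof -
  have iH: "i \<in> H" "i' \<in> H" using i i' Hp_H by auto
  define A2 where "A2 = {j \<in> Hp. w0 j = w0 i \<and> s2 j}"
  have fin: "finite A2" "finite (Agr i \<inter> Agr i')" unfolding A2_def Agr_def using fin_Hp by auto
  have "{j \<in> Hp. u1 i j \<and> s2 j} \<subseteq> A2 \<union> (Agr i \<inter> Agr i')"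
  proof
    fix j assume j: "j \<in> {j \<in> Hp. u1 i j \<and> s2 j}"
    then have "w0 j = w0 i \<or> w0 j = w0 i'" using two s2_s1 by auto
    moreover have "j \<in> Agr i" using j u1_Agr[OF iH(1)] by auto
    moreover have "w0 j = w0 i' \<Longrightarrow> j \<in> Agr i'" using j agr_own unfolding Agr_def by auto
    ultimately show "j \<in> A2 \<union> (Agr i \<inter> Agr i')" using j unfolding A2_def by auto
  qed
  then have "card {j \<in> Hp. u1 i j \<and> s2 j} \<le> card (A2 \<union> (Agr i \<inter> Agr i'))" using fin by (intro card_mono) auto
  also have "\<dots> \<le> card A2 + card (Agr i \<inter> Agr i')" by (rule card_Un_le)
  finally have c1: "card {j \<in> Hp. u1 i j \<and> s2 j} \<le> card A2 + t div 5" using agr_int[OF iH i'(2)] by linarith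
  have c2: "card Hp - t \<le> card {j \<in> Hp. u1 i j \<and> s2 j}" using th3[OF i(2)] q_eq by linarith
  have "\<exists>j \<in> A2. j \<notin> Agr i'"
  proof (rule ccontr)
    assume "\<not> (\<exists>j \<in> A2. j \<notin> Agr i')"
    then have "A2 \<subseteq> Agr i \<inter> Agr i'" unfolding A2_def Agr_def using agr_own by auto
    then have "card A2 \<le> t div 5" using card_mono[OF fin(2)] agr_int[OF iH i'(2)] by (meson le_trans)
    moreover have "5 * (t div 5) \<le> t" by simp
    ultimately show False using c1 c2 card_Hp by linarith
  qed
  then obtain j where j: "j \<in> A2" "j \<notin> Agr i'" by blast
  have jH: "j \<in> H" "j \<in> Hp" using j unfolding A2_def using Hp_H by auto
  have "{p \<in> Hp. u1 j p \<and> s1 p} \<subseteq> {j \<in> Hp. w0 j = w0 i}"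
  proof
    fix p assume p: "p \<in> {p \<in> Hp. u1 j p \<and> s1 p}"
    then have pH: "p \<in> H" using Hp_H by auto
    have "w0 p = w0 i \<or> w0 p = w0 i'" using two p by auto
    moreover have "w0 p \<noteq> w0 i'"
    proof
      assume "w0 p = w0 i'"
      moreover have "agr p j" using p u1_honest[OF pH] by auto
      ultimately have "agr i' j" using agr_same by metis
      then show False using j jH unfolding Agr_def by auto
    qed
    ultimately show "p \<in> {j \<in> Hp. w0 j = w0 i}" using p by auto
  qed
  then have "card {p \<in> Hp. u1 j p \<and> s1 p} \<le> card {j \<in> Hp. w0 j = w0 i}" using fin_Hp by (intro card_mono) auto
  moreover have "s2 j" using j unfolding A2_def by auto
  then have "m - t \<le> card {p \<in> Hp. u1 j p \<and> s1 p} + card D" by (rule th2)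
  ultimately show ?thesis using q_eq by linarith
qed

lemma agreement:
  assumes "i \<in> Hp" "s3 i" "i' \<in> Hp" "s3 i'"
  shows "w0 i = w0 i'"
proof (rule ccontr)
  assume ne: "w0 i \<noteq> w0 i'"
  have s1: "s1 i" "s1 i'" using assms s3_s2 s2_s1 by auto
  have two: "w0 j = w0 i \<or> w0 j = w0 i'" if "j \<in> Hp" "s1 j" for j
  proof (rule ccontr)
    assume "\<not> (w0 j = w0 i \<or> w0 j = w0 i')"
    then show False using three_groups[OF assms(1) assms(3) that(1) s1 that(2) ne] by auto
  qed
  have two': "w0 j = w0 i' \<or> w0 j = w0 i" if "j \<in> Hp" "s1 j" for j using two[OF that] by auto
  have A: "card Hp - t \<le> card {j \<in> Hp. w0 j = w0 i}" using big_group[OF assms(1,2,3) ne two] by blast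
  have B: "card Hp - t \<le> card {j \<in> Hp. w0 j = w0 i'}"
    using big_group[OF assms(3,4,1) ne[symmetric] two'] by blast
  have "card ({j \<in> Hp. w0 j = w0 i} \<union> {j \<in> Hp. w0 j = w0 i'}) = card {j \<in> Hp. w0 j = w0 i} + card {j \<in> Hp. w0 j = w0 i'}"
    using ne fin_Hp by (intro card_Un_disjoint) auto
  moreover have "card ({j \<in> Hp. w0 j = w0 i} \<union> {j \<in> Hp. w0 j = w0 i'}) \<le> card Hp"
    using fin_Hp by (intro card_mono) auto
  ultimately show False using A B card_Hp by linarith
qed


lemma params: "1 \<le> c" "l \<le> k * c" "m + 1 \<le> 2 ^ c"
  using cpar_props[OF l1, where m=m and t=t] unfolding c_def k_def by auto

lemma k_le: "k \<le> 2 ^ c - 1"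
proof -
  have "k \<le> m" unfolding k_def kpar_def using mt by simp
  then show ?thesis using params by linarith
qed

lemma Pr_N: "j \<in> Pr \<Longrightarrow> j \<in> {1..2 ^ c - 1}" using params unfolding Pr_def by auto

lemma y_carrier: "i \<in> H \<Longrightarrow> j \<in> Pr \<Longrightarrow> y i j \<in> carrier R"
  unfolding y_def R_def
  by (rule evalc_in[OF valid params(1) k_le Pr_N]) (use encm_carrier[OF valid params(1)] wl params(2) in auto)

context
  fixes i1 assumes i1: "i1 \<in> Hp" "s3 i1" and Tbig: "t + 1 \<le> card {j \<in> Hp. s3 j}"
begin

lemma T_w: "j \<in> Hp \<Longrightarrow> s3 j \<Longrightarrow> w0 j = w0 i1" using agreement i1 by blast

lemma maj_eq:
  assumes i: "i \<in> Hp" "\<not> s3 i"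
  shows "maj i = y i1 i"
proof -
  define cnt where "cnt v = card {j \<in> S1 i. fst (pair1 i j) = v}" for v
  have finS: "finite (S1 i)" unfolding S1_def using fin_Pr by auto
  have "{j \<in> Hp. s3 j} \<subseteq> {j \<in> S1 i. fst (pair1 i j) = y i1 i}"
  proof
    fix j assume j: "j \<in> {j \<in> Hp. s3 j}"
    then have jH: "j \<in> H" using Hp_H by auto
    have "fst (pair1 i j) = y j i" unfolding pair1_def using jH by simp
    also have "\<dots> = y i1 i" using j by (intro y_same T_w) auto
    finally show "j \<in> {j \<in> S1 i. fst (pair1 i j) = y i1 i}" using j jH rec3_h Hp_Pr unfolding S1_def by auto
  qed
  then have "card {j \<in> Hp. s3 j} \<le> cnt (y i1 i)" unfolding cnt_def using finS by (intro card_mono) auto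
  then have cbig: "t + 1 \<le> cnt (y i1 i)" using Tbig by linarith
  have csmall: "cnt v \<le> t" if "v \<noteq> y i1 i" for v
  proof -
    have "{j \<in> S1 i. fst (pair1 i j) = v} \<subseteq> D"
    proof
      fix j assume j: "j \<in> {j \<in> S1 i. fst (pair1 i j) = v}"
      show "j \<in> D"
      proof (rule ccontr)
        assume "j \<notin> D"
        then have jH: "j \<in> Hp" "j \<in> H" using j unfolding D_def Hp_def S1_def by auto
        then have "s3 j" using j rec3_h unfolding S1_def by auto
        then have "y j i = y i1 i" using jH by (intro y_same T_w) auto
        then have "fst (pair1 i j) = y i1 i" using jH unfolding pair1_def by simp
        then show False using j that by auto
      qed
    qed
    then show ?thesis unfolding cnt_def using card_mono[OF fin_D] card_D by (meson le_trans)
  qed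
  have yc: "y i1 i \<in> carrier R" using y_carrier Hp_H Hp_Pr i1 i by auto
  have "\<forall>v'. cnt v' \<le> cnt (y i1 i)"
  proof
    fix v' show "cnt v' \<le> cnt (y i1 i)" by (cases "v' = y i1 i") (use cbig csmall[of v'] in auto)
  qed
  then have ex: "y i1 i \<in> carrier R \<and> (\<forall>v'. cnt v' \<le> cnt (y i1 i))" using yc by blast
  have "maj i \<in> carrier R \<and> (\<forall>v'. cnt v' \<le> cnt (maj i))"
    unfolding maj_def cnt_def[symmetric] using someI[of "\<lambda>v. v \<in> carrier R \<and> (\<forall>v'. cnt v' \<le> cnt v)", OF ex] .
  then have "cnt (y i1 i) \<le> cnt (maj i)" by blast
  show ?thesis
  proof (rule ccontr)
    assume "maj i \<noteq> y i1 i"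
    then have "cnt (maj i) \<le> t" using csmall by blast
    then show False using cbig \<open>cnt (y i1 i) \<le> cnt (maj i)\<close> by linarith
  qed
qed

lemma z_eq:
  assumes i: "i \<in> Hp" "\<not> s3 i" and j: "j \<in> Hp"
  shows "z i j = y i1 j"
proof -
  have jH: "j \<in> H" using j Hp_H by auto
  show ?thesis
  proof (cases "j = i")
    case True then show ?thesis unfolding z_def using maj_eq i by simp
  next
    case False
    show ?thesis
    proof (cases "s3 j")
      case True
      then have "j \<notin> S0 i" unfolding S0_def using rec3_h jH by auto
      then have "z i j = snd (pair1 i j)" unfolding z_def using False by simp
      also have "\<dots> = y j j" unfolding pair1_def using jH by simp
      also have "\<dots> = y i1 j" using j True by (intro y_same T_w) auto
      finally show ?thesis .
    next
      case ns: False
      then have "j \<in> S0 i" unfolding S0_def using rec3_h jH Hp_Pr j by auto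
      then have "z i j = ph4 i j" unfolding z_def using False by simp
      also have "i \<in> S0 j" unfolding S0_def using rec3_h Hp_H Hp_Pr i by auto
      then have "ph4 i j = maj j" unfolding ph4_def using jH ns by simp
      also have "\<dots> = y i1 j" using maj_eq j ns by simp
      finally show ?thesis .
    qed
  qed
qed

lemma decode_eq:
  assumes i: "i \<in> Hp" "\<not> s3 i"
  shows "decode i = Some (w0 i1)"
proof -
  have i1H: "i1 \<in> H" using i1 Hp_H by auto
  have ev: "evalc G c k j (encm G c k (w0 i1)) = y i1 j" for j unfolding y_def by simp
  have cons: "consistent i (w0 i1)"
  proof -
    have "Hp \<subseteq> {j \<in> Pr. evalc G c k j (encm G c k (w0 i1)) = z i j}"
      using z_eq[OF i] ev Hp_Pr by auto
    then have "card Hp \<le> card {j \<in> Pr. evalc G c k j (encm G c k (w0 i1)) = z i j}"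
      using fin_Pr by (intro card_mono) auto
    then show ?thesis unfolding consistent_def using card_HD card_D by linarith
  qed
  have msg: "w0 i1 \<in> Msgs" unfolding Msgs_def using wl i1H by simp
  have uniq: "x = w0 i1" if x: "x \<in> Msgs" "consistent i x" for x
  proof -
    define P where "P = {j \<in> Hp. evalc G c k j (encm G c k x) = z i j}"
    have "m - t \<le> card P + card D" unfolding P_def
      using x(2) count_split[of "\<lambda>j. evalc G c k j (encm G c k x) = z i j"] unfolding consistent_def by linarith
    then have "k \<le> card P" using q_eq card_Hp unfolding k_def kpar_def by linarith
    moreover have "P \<subseteq> {1..m}" unfolding P_def Hp_def Pr_def by auto
    moreover have "evalc G c k p (encm G c k x) = evalc G c k p (encm G c k (w0 i1))" if "p \<in> P" for p
      using that z_eq[OF i] ev unfolding P_def by auto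
    ultimately show ?thesis using rs_msg[OF valid l1, of x "w0 i1" P m t] x(1) msg
      unfolding Msgs_def c_def k_def by auto
  qed
  have "(SOME x. x \<in> Msgs \<and> consistent i x) = w0 i1"
    using someI[of "\<lambda>x. x \<in> Msgs \<and> consistent i x" "w0 i1"] msg cons uniq by blast
  then show ?thesis unfolding decode_def using msg cons by auto
qed

end

lemma core_main:
  "(\<forall>i\<in>Hp. out i = None) \<or> (\<exists>w. length w = l \<and> (\<forall>i\<in>Hp. out i = Some w))"
proof (cases decision)
  case False then show ?thesis unfolding out_def by simp
next
  case True
  have "\<exists>i0\<in>Hp. vote i0"
  proof (rule ccontr)
    assume "\<not> (\<exists>i0\<in>Hp. vote i0)"
    then have nv: "\<forall>i\<in>H \<inter> Pr. \<not> vote i" unfolding Hp_def by auto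
    have "Hp \<noteq> {}" using card_Hp by auto
    then obtain x where "x \<in> Hp" by blast
    then have "\<not> (\<forall>i\<in>H \<inter> Pr. vote i)" using nv unfolding Hp_def by blast
    then have "\<not> decision" unfolding decision_def using nv by simp
    then show False using True by simp
  qed
  then obtain i0 where i0: "i0 \<in> Hp" "vote i0" by blast
  have "2 * t + 1 \<le> card {j \<in> Pr. rec3 i0 j}" using i0 unfolding vote_def by simp
  also have "\<dots> \<le> card {j \<in> Hp. rec3 i0 j} + card D" by (rule count_split)
  also have "{j \<in> Hp. rec3 i0 j} = {j \<in> Hp. s3 j}" using rec3_h Hp_H by auto
  finally have Tbig: "t + 1 \<le> card {j \<in> Hp. s3 j}" using card_D by linarith
  have "{j \<in> Hp. s3 j} \<noteq> {}"
  proof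
    assume e: "{j \<in> Hp. s3 j} = {}"
    have "card {j \<in> Hp. s3 j} = 0" unfolding e by simp
    then show False using Tbig by linarith
  qed
  then obtain i1 where i1: "i1 \<in> Hp" "s3 i1" by auto
  have "out i = Some (w0 i1)" if i: "i \<in> Hp" for i
  proof (cases "s3 i")
    case True
    have "w0 i = w0 i1" using agreement[OF i True i1] .
    then show ?thesis unfolding out_def using \<open>decision\<close> True by simp
  next
    case False then show ?thesis unfolding out_def using \<open>decision\<close> decode_eq[OF i1 Tbig i] by auto
  qed
  moreover have "length (w0 i1) = l" using wl i1 Hp_H by auto
  ultimately show ?thesis by blast
qed

lemma core_valid:
  assumes allM: "\<And>i. i \<in> Hp \<Longrightarrow> w0 i = M"
  shows "\<forall>i\<in>Hp. out i = Some M"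
proof -
  have u1a: "u1 i j" if "i \<in> Hp" "j \<in> Hp" for i j
  proof -
    have "w0 i = w0 j" using that allM by simp
    then have "agr i j" "agr j i" using agr_own by auto
    then show ?thesis using u1_honest[of j i] Hp_H that by simp
  qed
  have cHp: "m - t \<le> card Hp" using card_HD card_D by linarith
  have S1: "s1 i" if "i \<in> Hp" for i
  proof -
    have "Hp \<subseteq> {j \<in> Pr. u1 i j}" using u1a that Hp_Pr by auto
    then have "card Hp \<le> card {j \<in> Pr. u1 i j}" using fin_Pr by (intro card_mono) auto
    then show ?thesis unfolding s1_def using cHp by linarith
  qed
  have S2: "s2 i" if "i \<in> Hp" for i
  proof -
    have "Hp \<subseteq> {j \<in> Pr. u2 i j}" using u1a that Hp_Pr S1 rec1_h Hp_H unfolding u2_def by auto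
    then have "card Hp \<le> card {j \<in> Pr. u2 i j}" using fin_Pr by (intro card_mono) auto
    then show ?thesis unfolding s2_def using cHp S1 that by auto
  qed
  have S3: "s3 i" if "i \<in> Hp" for i
  proof -
    have "Hp \<subseteq> {j \<in> Pr. u3 i j}" using u1a that Hp_Pr S1 S2 rec1_h rec2_h Hp_H unfolding u3_def u2_def by auto
    then have "card Hp \<le> card {j \<in> Pr. u3 i j}" using fin_Pr by (intro card_mono) auto
    then show ?thesis unfolding s3_def using cHp S2 that by auto
  qed
  have V: "vote i" if "i \<in> Hp" for i
  proof -
    have "Hp \<subseteq> {j \<in> Pr. rec3 i j}" using S3 rec3_h Hp_H Hp_Pr by auto
    then have "card Hp \<le> card {j \<in> Pr. rec3 i j}" using fin_Pr by (intro card_mono) auto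
    then show ?thesis unfolding vote_def using card_Hp by linarith
  qed
  have "decision" unfolding decision_def using V unfolding Hp_def by auto
  then show ?thesis unfolding out_def using S3 allM by auto
qed

end

context cool_ok begin

lemma outsider:
  assumes r: "\<And>p. p \<in> Hp \<Longrightarrow> r p = map_option (\<lambda>x. evalc G c k p (encm G c k x)) (out p)"
    and i0: "i0 \<in> Hp"
  shows "(if \<exists>x. length x = l \<and> m - t \<le> card {p \<in> {1..m}. r p = Some (evalc G c k p (encm G c k x))}
          then Some (SOME x. length x = l \<and> m - t \<le> card {p \<in> {1..m}. r p = Some (evalc G c k p (encm G c k x))})
          else None) = out i0"
proof -
  define ok where "ok x = (m - t \<le> card {p \<in> Pr. r p = Some (evalc G c k p (encm G c k x))})" for x
  have okd: "(m - t \<le> card {p \<in> {1..m}. r p = Some (evalc G c k p (encm G c k x))}) = ok x" for x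
    unfolding ok_def Pr_def ..
  from core_main consider (N) "\<forall>i\<in>Hp. out i = None" | (S) w where "length w = l" "\<forall>i\<in>Hp. out i = Some w"
    by blast
  then show ?thesis
  proof cases
    case N
    have "\<not> ok x" for x
    proof
      assume "ok x"
      have "{p \<in> Pr. r p = Some (evalc G c k p (encm G c k x))} \<subseteq> D"
        using r N unfolding D_def Hp_def by auto
      then have "card {p \<in> Pr. r p = Some (evalc G c k p (encm G c k x))} \<le> t"
        using card_mono[OF fin_D] card_D le_trans by blast
      then show False using \<open>ok x\<close> mt unfolding ok_def by linarith
    qed
    then show ?thesis unfolding okd using N i0 by auto
  next
    case S
    have okw: "ok w"
    proof -
      have "Hp \<subseteq> {p \<in> Pr. r p = Some (evalc G c k p (encm G c k w))}" using r S Hp_Pr by auto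
      then have "card Hp \<le> card {p \<in> Pr. r p = Some (evalc G c k p (encm G c k w))}"
        using fin_Pr by (intro card_mono) auto
      then show ?thesis unfolding ok_def using card_HD card_D by linarith
    qed
    have uniq: "x = w" if x: "length x = l" "ok x" for x
    proof -
      define P where "P = {p \<in> Hp. r p = Some (evalc G c k p (encm G c k x))}"
      have "m - t \<le> card P + card D" unfolding P_def
        using x(2) count_split[of "\<lambda>p. r p = Some (evalc G c k p (encm G c k x))"] unfolding ok_def by linarith
      then have "k \<le> card P" using q_eq card_Hp unfolding k_def kpar_def by linarith
      moreover have "P \<subseteq> {1..m}" unfolding P_def Hp_def Pr_def by auto
      moreover have "evalc G c k p (encm G c k x) = evalc G c k p (encm G c k w)" if "p \<in> P" for p
        using that r S unfolding P_def by auto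
      ultimately show ?thesis using rs_msg[OF valid l1, of x w P m t] x(1) S(1)
        unfolding c_def k_def by auto
    qed
    have "(SOME x. length x = l \<and> ok x) = w"
      using someI[of "\<lambda>x. length x = l \<and> ok x" w] okw S(1) uniq by blast
    then show ?thesis unfolding okd using okw S i0 by auto
  qed
qed

end

lemma init_len: "length M = l \<Longrightarrow> length (init_msg l L M B A i) = l"
  unfolding init_msg_def by auto

lemma core_size_props:
  assumes "3 * t + 1 \<le> n"
  shows "core_size C n t \<le> n" "3 * t + 1 \<le> core_size C n t"
    "\<not> small_case C n t \<Longrightarrow> core_size C n t = 3 * t + 1"
    "small_case C n t \<Longrightarrow> core_size C n t = n"
  using assms unfolding core_size_def by auto

theorem cool_correct:
  assumes G: "valid_gf G" and n: "1 \<le> l" "3 * t + 1 \<le> n" "L \<in> {1..n}" "length M = l"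
    "B \<subseteq> {1..n}" "card B \<le> t"
  shows "(\<forall>i \<in> honest n B. cool_out G C n t l L M B A i = None) \<or>
         (\<exists>w. length w = l \<and> (\<forall>i \<in> honest n B. cool_out G C n t l L M B A i = Some w))"
    and "L \<notin> B \<Longrightarrow> \<forall>i \<in> honest n B. cool_out G C n t l L M B A i = Some M"
proof -
  define m where "m = core_size C n t"
  define w where "w = init_msg l L M B A"
  define Hn where "Hn = honest n B"
  have mn: "m \<le> n" "3 * t + 1 \<le> m" using core_size_props[OF n(2)] unfolding m_def by auto
  have bad: "card ({1..m} - Hn) \<le> t"
  proof -
    have "{1..m} - Hn \<subseteq> B" unfolding Hn_def honest_def using mn by auto
    moreover have "finite B" using n(5) finite_subset by blast
    ultimately show ?thesis using n(6) card_mono le_trans by blast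
  qed
  have wl: "\<And>i. length (w i) = l" using init_len[OF n(4)] unfolding w_def by blast
  interpret O: cool_ok G m t l Hn w A
    by unfold_locales (use G mn bad n(1) wl in auto)
  have Hp: "O.Hp = Hn \<inter> {1..m}" unfolding O.Hp_def O.Pr_def ..
  have main: "(\<forall>i\<in>Hn. cool_out G C n t l L M B A i = O.out i0) " if i0: "i0 \<in> O.Hp" for i0
  proof
    fix i assume i: "i \<in> Hn"
    have commn: "O.out i = O.out i0" if "i \<le> m"
    proof -
      have "i \<in> O.Hp" using i that Hp unfolding Hn_def honest_def by auto
      then show ?thesis using O.core_main i0 by auto
    qed
    show "cool_out G C n t l L M B A i = O.out i0"
    proof (cases "i \<le> m")
      case True
      then show ?thesis unfolding cool_out_def Let_def m_def[symmetric] w_def[symmetric] Hn_def[symmetric]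
        using commn by simp
    next
      case False
      then have ns: "\<not> small_case C n t" using core_size_props[OF n(2)] i unfolding m_def Hn_def honest_def by auto
      then have m3: "m = 3 * t + 1" using core_size_props[OF n(2)] unfolding m_def by auto
      have cc: "cpar m t l = O.c" "kpar t = O.k" using O.c_def O.k_def by auto
      define rr where "rr p = (if p \<in> Hn then map_option (\<lambda>x. evalc G O.c O.k p (encm G O.c O.k x)) (O.out p)
               else map_option (sanit (gf G O.c)) (fin_val A p i))" for p
      have rp: "rr p = map_option (\<lambda>x. evalc G O.c O.k p (encm G O.c O.k x)) (O.out p)" if "p \<in> O.Hp" for p
        using that Hp unfolding rr_def by auto
      have X: "(if \<exists>x. length x = l \<and> m - t \<le> card {p \<in> {1..m}. rr p = Some (evalc G O.c O.k p (encm G O.c O.k x))}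
          then Some (SOME x. length x = l \<and> m - t \<le> card {p \<in> {1..m}. rr p = Some (evalc G O.c O.k p (encm G O.c O.k x))})
          else None) = O.out i0" by (rule O.outsider[OF rp i0])
      show ?thesis unfolding cool_out_def Let_def m_def[symmetric] w_def[symmetric] Hn_def[symmetric]
        unfolding m3[symmetric] unfolding cc X[symmetric] rr_def using False by simp
    qed
  qed
  obtain i0 where i0: "i0 \<in> O.Hp" using O.card_Hp by (metis Suc_eq_plus1 card.empty all_not_in_conv not_less_eq_eq zero_le)
  from O.core_main show "(\<forall>i \<in> honest n B. cool_out G C n t l L M B A i = None) \<or>
         (\<exists>w. length w = l \<and> (\<forall>i \<in> honest n B. cool_out G C n t l L M B A i = Some w))"
    using main[OF i0] i0 unfolding Hn_def by metis
  assume LB: "L \<notin> B"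
  have "\<forall>i\<in>O.Hp. O.out i = Some M"
    by (rule O.core_valid) (use LB in \<open>simp add: w_def init_msg_def\<close>)
  then show "\<forall>i \<in> honest n B. cool_out G C n t l L M B A i = Some M"
    using main[OF i0] i0 unfolding Hn_def by metis
qed

context cool_core begin

lemma bits_le: "bits \<le> m * (3 * (c * m) + 3 * m)"
proof -
  have fin: "finite Pr" unfolding Pr_def by simp
  have tm: "2 * c * (m - 1) + (m - 1)
          + (if s1 i \<and> \<not> s2 i then m - 1 else 0)
          + (if s2 i \<and> \<not> s3 i then m - 1 else 0)
          + (if decision \<and> \<not> s3 i then c * card (S0 i - {i}) else 0) \<le> 3 * (c * m) + 3 * m" for i
  proof -
    have "S0 i - {i} \<subseteq> Pr" unfolding S0_def by auto
    then have "card (S0 i - {i}) \<le> m" using card_mono[OF fin] unfolding Pr_def by fastforce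
    then have a: "c * card (S0 i - {i}) \<le> c * m" by simp
    have b: "2 * c * (m - 1) \<le> 2 * (c * m)" by (simp add: diff_mult_distrib2)
    have d: "(if decision \<and> \<not> s3 i then c * card (S0 i - {i}) else 0) \<le> c * m" using a by auto
    have e: "(if s1 i \<and> \<not> s2 i then m - 1 else 0) \<le> m" "(if s2 i \<and> \<not> s3 i then m - 1 else 0) \<le> m" by auto
    show ?thesis using b d e by linarith
  qed
  have "bits \<le> of_nat (card (H \<inter> Pr)) * (3 * (c * m) + 3 * m)"
    unfolding bits_def by (rule sum_bounded_above) (rule tm)
  then have b1: "bits \<le> card (H \<inter> Pr) * (3 * (c * m) + 3 * m)" by simp
  have "card (H \<inter> Pr) \<le> m" using card_mono[OF fin, of "H \<inter> Pr"] unfolding Pr_def by auto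
  from le_trans[OF b1 mult_le_mono1[OF this]] show ?thesis .
qed

lemma rounds_le: "rounds \<le> 5" unfolding rounds_def by auto

end

lemma log_nonneg_nat: "0 \<le> log 2 (real t)"
  by (cases "t = 0") (auto simp: log_def)

lemma tlog_nonneg: "0 \<le> real t * log 2 (real t)"
  using log_nonneg_nat by simp

lemma cpar_le:
  assumes "1 \<le> l"
  shows "real (cpar m t l) \<le> 5 * max (real l) ((real t / 5 + 1) * log 2 (real m + 1)) / (real t + 1) + 1"
proof -
  define X where "X = max (real l) ((real t / 5 + 1) * log 2 (real m + 1))"
  have Xp: "X \<ge> 0" unfolding X_def by simp
  have "t \<le> 5 * (t div 5) + 4" by presburger
  then have "real t \<le> real (5 * (t div 5) + 4)" by (simp only: of_nat_le_iff)
  then have k: "real (kpar t) \<ge> (real t + 1) / 5" unfolding kpar_def by simp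
  have kp: "real (kpar t) > 0" unfolding kpar_def by simp
  have "real (cpar m t l) \<le> X / real (kpar t) + 1"
  proof -
    have "real (cpar m t l) = real (nat \<lceil>X / real (kpar t)\<rceil>)" unfolding cpar_def X_def by simp
    also have "\<dots> = of_int \<lceil>X / real (kpar t)\<rceil>" using Xp kp by simp
    also have "\<dots> \<le> X / real (kpar t) + 1" by (rule of_int_ceiling_le_add_one)
    finally show ?thesis .
  qed
  moreover have B: "X / real (kpar t) \<le> X / ((real t + 1) / 5)"
    using k Xp by (intro divide_left_mono) auto
  moreover have E: "X / ((real t + 1) / 5) = 5 * X / (real t + 1)" by simp
  ultimately have "real (cpar m t l) \<le> 5 * X / (real t + 1) + 1"
    using order_trans add_right_mono by (metis (no_types))
  then show ?thesis unfolding X_def .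
qed


lemma m_bound:
  assumes "3 * t + 1 \<le> n"
  shows "real (core_size C n t) \<le> max C 4 * (real t + 1)" "core_size C n t \<le> n"
proof -
  show "core_size C n t \<le> n" using assms unfolding core_size_def by auto
  show "real (core_size C n t) \<le> max C 4 * (real t + 1)"
  proof (cases "small_case C n t")
    case True
    then have "real n \<le> C * real t" unfolding small_case_def by simp
    also have "\<dots> \<le> max C 4 * real t" by (intro mult_right_mono) auto
    also have "\<dots> \<le> max C 4 * (real t + 1)" by (intro mult_left_mono) auto
    finally show ?thesis using True unfolding core_size_def by simp
  next
    case False
    then have "real (core_size C n t) = 3 * real t + 1" unfolding core_size_def by simp
    also have "\<dots> \<le> 4 * (real t + 1)" by simp
    also have "\<dots> \<le> max C 4 * (real t + 1)" by (intro mult_right_mono) auto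
    finally show ?thesis .
  qed
qed

lemma logm_bound:
  fixes C' :: real and m t :: nat
  assumes C': "C' \<ge> 4" and m: "real m \<le> C' * (real t + 1)"
  shows "(real t / 5 + 1) * log 2 (real m + 1) \<le> (log 2 (2 * (C' + 1)) + 1) * (real t * log 2 (real t)) + 2 * log 2 (2 * (C' + 1))"
proof -
  define A0 where "A0 = log 2 (2 * (C' + 1))"
  have A0p: "A0 \<ge> 0" unfolding A0_def using C' by simp
  have lm0: "log 2 (real m + 1) \<ge> 0" by simp
  show ?thesis
  proof (cases "t = 0")
    case True
    then have "real m + 1 \<le> 2 * (C' + 1)" using m C' by simp
    then have "log 2 (real m + 1) \<le> A0" unfolding A0_def by simp
    then show ?thesis using True A0p unfolding A0_def[symmetric] by simp
  next
    case False
    then have t1: "real t \<ge> 1" by simp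
    have "real m + 1 \<le> C' * (real t + 1) + 1" using m by simp
    also have "\<dots> \<le> 2 * (C' + 1) * real t"
    proof -
      have "C' * 1 \<le> C' * real t" by (rule mult_left_mono) (use t1 C' in auto)
      moreover have "C' * (real t + 1) = C' * real t + C'" "2 * (C' + 1) * real t = 2 * (C' * real t) + 2 * real t"
        by (simp_all add: algebra_simps)
      ultimately show ?thesis using t1 by linarith
    qed
    finally have "log 2 (real m + 1) \<le> log 2 (2 * (C' + 1) * real t)" by simp
    also have "\<dots> = A0 + log 2 (real t)" unfolding A0_def using t1 C' by (simp add: log_mult)
    finally have lm: "log 2 (real m + 1) \<le> A0 + log 2 (real t)" .
    show ?thesis
    proof (cases "t = 1")
      case True
      then have "log 2 (real m + 1) \<le> A0" using lm by simp
      then have "(real t / 5 + 1) * log 2 (real m + 1) \<le> 6 / 5 * A0" using True lm0 by simp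
      then show ?thesis using True A0p unfolding A0_def[symmetric] by simp
    next
      case False
      then have t2: "real t \<ge> 2" using t1 \<open>t \<noteq> 0\<close> by simp
      then have lt: "log 2 (real t) \<ge> 1" by simp
      have "A0 * 1 \<le> A0 * log 2 (real t)" by (rule mult_left_mono) (use lt A0p in auto)
      moreover have "(A0 + 1) * log 2 (real t) = A0 * log 2 (real t) + log 2 (real t)" by (simp add: algebra_simps)
      ultimately have "log 2 (real m + 1) \<le> (A0 + 1) * log 2 (real t)" using lm by linarith
      moreover have "real t / 5 + 1 \<le> real t" using t2 by simp
      ultimately have "(real t / 5 + 1) * log 2 (real m + 1) \<le> real t * ((A0 + 1) * log 2 (real t))"
        using lm0 by (intro mult_mono) auto
      also have "\<dots> = (A0 + 1) * (real t * log 2 (real t))" by simp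
      finally show ?thesis using A0p unfolding A0_def[symmetric] by simp
    qed
  qed
qed

lemma Phi_facts:
  fixes n t l :: nat
  assumes "1 \<le> l"
  defines "Phi \<equiv> max (real n * real l) (real n * real t * log 2 (real t))"
  shows "real n * real l \<le> Phi" "real n \<le> Phi" "real n * (real t * log 2 (real t)) \<le> Phi"
    "real n * (real t + 1) \<le> 2 * Phi" "0 \<le> Phi"
proof -
  show p1: "real n * real l \<le> Phi" unfolding Phi_def by simp
  have "real n * 1 \<le> real n * real l" using assms(1) by (intro mult_left_mono) auto
  then show p2: "real n \<le> Phi" using p1 by simp
  show p3: "real n * (real t * log 2 (real t)) \<le> Phi" unfolding Phi_def by (simp add: mult.assoc)
  have "real n * real t \<le> Phi"
  proof (cases "t \<le> 1")
    case True
    then have "real n * real t \<le> real n * 1" by (intro mult_left_mono) auto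
    then show ?thesis using p2 by simp
  next
    case False
    then have "log 2 (real t) \<ge> 1" by simp
    then have "real n * real t * 1 \<le> real n * real t * log 2 (real t)" by (intro mult_left_mono) auto
    then show ?thesis using p3 by (simp add: mult.assoc)
  qed
  then show "real n * (real t + 1) \<le> 2 * Phi" using p2 by (simp add: algebra_simps)
  show "0 \<le> Phi" using p2 by simp
qed

theorem cool_cost:
  fixes ba_bits :: "nat \<Rightarrow> nat \<Rightarrow> nat" and ba_rounds :: "nat \<Rightarrow> nat \<Rightarrow> nat" and G :: "'a gf_data"
  assumes Kb: "\<forall>m t. 3 * t + 1 \<le> m \<longrightarrow>
            real (ba_bits m t) \<le> Kb * real m * real (t + 1) \<and> real (ba_rounds m t) \<le> Kb * real (t + 1)"
  shows "\<exists>K. \<forall>n t l L M B (A :: 'a adversary).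
     1 \<le> n \<and> 1 \<le> l \<and> 3 * t + 1 \<le> n \<and> B \<subseteq> {1..n} \<longrightarrow>
     real (cool_rounds ba_rounds G C n t l L M B A) \<le> K * real (t + 1)
     \<and> real (cool_bits ba_bits G C n t l L M B A) \<le> K * max (real n * real l) (real n * real t * log 2 (real t))"
proof -
  define Kp where "Kp = \<bar>Kb\<bar>"
  define C' where "C' = max C 4"
  define A0 where "A0 = log 2 (2 * (C' + 1))"
  define Q where "Q = 5 * C' * (2 + 3 * A0) + 2 * C'"
  define K where "K = max (7 + Kp) (1 + 8 * Q + 2 * Kp)"
  have C'4: "C' \<ge> 4" unfolding C'_def by simp
  have A0p: "A0 \<ge> 0" unfolding A0_def using C'4 by simp
  have Kpp: "Kp \<ge> 0" unfolding Kp_def by simp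
  have Qp: "Q \<ge> 0" unfolding Q_def using C'4 A0p by simp
  show ?thesis
  proof (rule exI[of _ K], intro allI impI)
    fix n t l L :: nat and M :: "bool list" and B :: "nat set" and A :: "'a adversary"
    assume asm: "1 \<le> n \<and> 1 \<le> l \<and> 3 * t + 1 \<le> n \<and> B \<subseteq> {1..n}"
    then have n: "1 \<le> n" "1 \<le> l" "3 * t + 1 \<le> n" "B \<subseteq> {1..n}" by auto
    define m where "m = core_size C n t"
    define c where "c = cpar m t l"
    define Phi where "Phi = max (real n * real l) (real n * real t * log 2 (real t))"
    have m3: "3 * t + 1 \<le> m" using core_size_props(2)[OF n(3)] unfolding m_def .
    have mC: "real m \<le> C' * (real t + 1)" and mn: "m \<le> n" using m_bound[OF n(3)] unfolding m_def C'_def by auto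
    have bab: "real (ba_bits m t) \<le> Kb * real m * real (t + 1)" and bar: "real (ba_rounds m t) \<le> Kb * real (t + 1)"
      using Kb m3 by auto
    have "real (ba_rounds m t) \<le> Kp * real (t + 1)" using bar unfolding Kp_def
      by (smt (verit) mult_right_mono of_nat_0_le_iff)
    moreover have "cool_core.rounds G m t l (honest n B) (init_msg l L M B A) A \<le> 5"
      by (rule cool_core.rounds_le)
    moreover have "cool_rounds ba_rounds G C n t l L M B A =
        1 + cool_core.rounds G m t l (honest n B) (init_msg l L M B A) A + ba_rounds m t
        + (if small_case C n t then 0 else 1)" unfolding cool_rounds_def m_def Let_def ..
    ultimately have "real (cool_rounds ba_rounds G C n t l L M B A) \<le> 7 + Kp * real (t + 1)" by auto
    also have "\<dots> \<le> (7 + Kp) * real (t + 1)" by (simp add: algebra_simps)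
    also have "\<dots> \<le> K * real (t + 1)" unfolding K_def by (intro mult_right_mono) auto
    finally have R1: "real (cool_rounds ba_rounds G C n t l L M B A) \<le> K * real (t + 1)" .
    have Ph: "real n * real l \<le> Phi" "real n \<le> Phi" "real n * (real t * log 2 (real t)) \<le> Phi"
      "real n * (real t + 1) \<le> 2 * Phi" "0 \<le> Phi" using Phi_facts[OF n(2), of n t] unfolding Phi_def by auto
    have c1: "1 \<le> c" unfolding c_def using cpar_props(1)[OF n(2)] .
    define X where "X = max (real l) ((real t / 5 + 1) * log 2 (real m + 1))"
    have cX: "real c \<le> 5 * X / (real t + 1) + 1" unfolding c_def X_def by (rule cpar_le[OF n(2)])
    have Xb: "X \<le> real l + (A0 + 1) * (real t * log 2 (real t)) + 2 * A0"
    proof -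
      have "(real t / 5 + 1) * log 2 (real m + 1) \<le> (A0 + 1) * (real t * log 2 (real t)) + 2 * A0"
        using logm_bound[OF C'4 mC] unfolding A0_def .
      moreover have "0 \<le> (A0 + 1) * (real t * log 2 (real t))" using A0p tlog_nonneg by simp
      ultimately show ?thesis unfolding X_def using A0p by auto
    qed
    have Xp: "X \<ge> 0" unfolding X_def by simp
    have XnPhi: "X * real n \<le> (2 + 3 * A0) * Phi"
    proof -
      have "X * real n \<le> (real l + (A0 + 1) * (real t * log 2 (real t)) + 2 * A0) * real n"
        using Xb by (intro mult_right_mono) auto
      also have "\<dots> = real n * real l + (A0 + 1) * (real n * (real t * log 2 (real t))) + 2 * A0 * real n"
        by (simp add: algebra_simps)
      also have "\<dots> \<le> Phi + (A0 + 1) * Phi + 2 * A0 * Phi"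
        using Ph A0p by (intro add_mono mult_left_mono) auto
      also have "\<dots> = (2 + 3 * A0) * Phi" by (simp add: algebra_simps)
      finally show ?thesis .
    qed
    have cmn: "real c * real m * real n \<le> Q * Phi"
    proof -
      have "real c * real m * real n \<le> (5 * X / (real t + 1) + 1) * real m * real n"
        using cX by (intro mult_right_mono) auto
      also have "\<dots> = 5 * X * (real m / (real t + 1)) * real n + real m * real n"
        by (simp add: algebra_simps)
      also have "\<dots> \<le> 5 * X * C' * real n + C' * (real t + 1) * real n"
      proof (intro add_mono mult_right_mono mult_left_mono)
        show "real m / (real t + 1) \<le> C'" using mC by (simp add: divide_le_eq mult.commute)
      qed (use mC Xp in auto)
      also have "\<dots> = 5 * C' * (X * real n) + C' * (real n * (real t + 1))" by (simp add: algebra_simps)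
      also have "\<dots> \<le> 5 * C' * ((2 + 3 * A0) * Phi) + C' * (2 * Phi)"
        using XnPhi Ph(4) C'4 by (intro add_mono mult_left_mono) auto
      also have "\<dots> = Q * Phi" unfolding Q_def by (simp add: algebra_simps)
      finally show ?thesis .
    qed
    have lead: "(if L \<notin> B then l * (n - 1) else 0) \<le> l * n" by auto
    have core: "cool_core.bits G m t l (honest n B) (init_msg l L M B A) A \<le> m * (3 * (c * m) + 3 * m)"
      using cool_core.bits_le[of G m t l "honest n B" "init_msg l L M B A" A] unfolding cool_core.c_def c_def .
    have outer: "(if small_case C n t then 0 else card (honest n B \<inter> {1..m}) * (cpar m t l + 1) * (n - m))
        \<le> m * (c + 1) * n"
    proof -
      have "card (honest n B \<inter> {1..m}) \<le> m" using card_mono[of "{1..m}" "honest n B \<inter> {1..m}"] by auto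
      then have "card (honest n B \<inter> {1..m}) * (cpar m t l + 1) * (n - m) \<le> m * (c + 1) * n"
        unfolding c_def by (intro mult_le_mono) auto
      then show ?thesis by auto
    qed
    have eqb: "cool_bits ba_bits G C n t l L M B A = (if L \<notin> B then l * (n - 1) else 0)
      + cool_core.bits G m t l (honest n B) (init_msg l L M B A) A + ba_bits m t
      + (if small_case C n t then 0 else card (honest n B \<inter> {1..m}) * (cpar m t l + 1) * (n - m))"
      unfolding cool_bits_def m_def Let_def ..
    have nb: "cool_bits ba_bits G C n t l L M B A \<le> l * n + m * (3 * (c * m) + 3 * m) + ba_bits m t + m * (c + 1) * n"
      unfolding eqb using lead core outer by linarith
    have rb: "real (cool_bits ba_bits G C n t l L M B A) \<le> real l * real n + real m * (3 * (real c * real m) + 3 * real m)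
        + real (ba_bits m t) + real m * (real c + 1) * real n"
    proof -
      have "real (cool_bits ba_bits G C n t l L M B A) \<le> real (l * n + m * (3 * (c * m) + 3 * m) + ba_bits m t + m * (c + 1) * n)"
        using nb of_nat_le_iff by blast
      then show ?thesis unfolding of_nat_add of_nat_mult of_nat_numeral of_nat_1 .
    qed
    have b1: "real m * (3 * (real c * real m) + 3 * real m) \<le> 6 * (real c * real m * real n)"
    proof -
      have "real m * real m \<le> real c * real m * real n"
      proof -
        have "real m * real m \<le> 1 * real m * real n" using mn by (intro mult_mono) auto
        also have "\<dots> \<le> real c * real m * real n" using c1 by (intro mult_right_mono) auto
        finally show ?thesis .
      qed
      moreover have "real c * real m * real m \<le> real c * real m * real n" using mn by (intro mult_left_mono) auto
      ultimately show ?thesis by (simp add: algebra_simps)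
    qed
    have b2: "real m * (real c + 1) * real n \<le> 2 * (real c * real m * real n)"
    proof -
      have "1 * (real m * real n) \<le> real c * (real m * real n)" using c1 by (intro mult_right_mono) auto
      then show ?thesis by (simp add: algebra_simps)
    qed
    have b3: "real (ba_bits m t) \<le> Kp * (real n * (real t + 1))"
    proof -
      have "Kb * (real m * (real t + 1)) \<le> Kp * (real m * (real t + 1))" unfolding Kp_def
        by (intro mult_right_mono) auto
      moreover have "Kb * real m * real (t + 1) = Kb * (real m * (real t + 1))" by simp
      ultimately have "real (ba_bits m t) \<le> Kp * (real m * (real t + 1))" using bab by linarith
      also have "\<dots> \<le> Kp * (real n * (real t + 1))" using mn Kpp by (intro mult_left_mono mult_right_mono) auto
      finally show ?thesis .
    qed
    have "real (cool_bits ba_bits G C n t l L M B A) \<le> Phi + 6 * (Q * Phi) + Kp * (2 * Phi) + 2 * (Q * Phi)"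
    proof -
      have "Kp * (real n * (real t + 1)) \<le> Kp * (2 * Phi)" using Ph(4) Kpp by (intro mult_left_mono) auto
      moreover have "real l * real n \<le> Phi" using Ph(1) by (simp add: mult.commute)
      ultimately show ?thesis using rb b1 b2 b3 cmn by linarith
    qed
    also have "\<dots> = (1 + 8 * Q + 2 * Kp) * Phi" by (simp add: algebra_simps)
    also have "\<dots> \<le> K * Phi" unfolding K_def using Ph(5) by (intro mult_right_mono) auto
    finally have R2: "real (cool_bits ba_bits G C n t l L M B A) \<le> K * max (real n * real l) (real n * real t * log 2 (real t))"
      unfolding Phi_def .
    show "real (cool_rounds ba_rounds G C n t l L M B A) \<le> K * real (t + 1)
     \<and> real (cool_bits ba_bits G C n t l L M B A) \<le> K * max (real n * real l) (real n * real t * log 2 (real t))"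
      using R1 R2 by blast
  qed
qed

theorem theorem2:
  fixes G :: "'a gf_data" and C :: real
    and ba_bits :: "nat \<Rightarrow> nat \<Rightarrow> nat" and ba_rounds :: "nat \<Rightarrow> nat \<Rightarrow> nat"
  assumes "valid_gf G"
    and "\<exists>Kb. \<forall>m t. 3 * t + 1 \<le> m \<longrightarrow>
            real (ba_bits m t) \<le> Kb * real m * real (t + 1) \<and> real (ba_rounds m t) \<le> Kb * real (t + 1)"
  shows "\<exists>K. \<forall>n t l L M B (A :: 'a adversary).
     1 \<le> n \<and> 1 \<le> l \<and> 3 * t + 1 \<le> n \<and> L \<in> {1..n} \<and> length M = l \<and> B \<subseteq> {1..n} \<and> card B \<le> t \<longrightarrow>
       (\<forall>i \<in> honest n B. case cool_out G C n t l L M B A i of None \<Rightarrow> True | Some x \<Rightarrow> length x = l)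
     \<and> (\<forall>i \<in> honest n B. \<forall>j \<in> honest n B. cool_out G C n t l L M B A i = cool_out G C n t l L M B A j)
     \<and> (L \<notin> B \<longrightarrow> (\<forall>i \<in> honest n B. cool_out G C n t l L M B A i = Some M))
     \<and> real (cool_rounds ba_rounds G C n t l L M B A) \<le> K * real (t + 1)
     \<and> real (cool_bits ba_bits G C n t l L M B A) \<le> K * max (real n * real l) (real n * real t * log 2 (real t))"
  proof -
  obtain Kb where Kb: "\<forall>m t. 3 * t + 1 \<le> m \<longrightarrow>
            real (ba_bits m t) \<le> Kb * real m * real (t + 1) \<and> real (ba_rounds m t) \<le> Kb * real (t + 1)"
    using assms(2) by blast
  obtain K where K: "\<forall>n t l L M B (A :: 'a adversary).
     1 \<le> n \<and> 1 \<le> l \<and> 3 * t + 1 \<le> n \<and> B \<subseteq> {1..n} \<longrightarrow>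
     real (cool_rounds ba_rounds G C n t l L M B A) \<le> K * real (t + 1)
     \<and> real (cool_bits ba_bits G C n t l L M B A) \<le> K * max (real n * real l) (real n * real t * log 2 (real t))"
    using cool_cost[OF Kb, of G C] by blast
  show ?thesis
  proof (rule exI[of _ K], intro allI impI)
    fix n t l L :: nat and M :: "bool list" and B :: "nat set" and A :: "'a adversary"
    assume h: "1 \<le> n \<and> 1 \<le> l \<and> 3 * t + 1 \<le> n \<and> L \<in> {1..n} \<and> length M = l \<and> B \<subseteq> {1..n} \<and> card B \<le> t"
    then have h': "1 \<le> l" "3 * t + 1 \<le> n" "L \<in> {1..n}" "length M = l" "B \<subseteq> {1..n}" "card B \<le> t" by auto
    have C1: "(\<forall>i \<in> honest n B. cool_out G C n t l L M B A i = None) \<or>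
         (\<exists>w. length w = l \<and> (\<forall>i \<in> honest n B. cool_out G C n t l L M B A i = Some w))"
      by (rule cool_correct(1)[OF assms(1) h'])
    have C2: "L \<notin> B \<longrightarrow> (\<forall>i \<in> honest n B. cool_out G C n t l L M B A i = Some M)"
      using cool_correct(2)[OF assms(1) h'] by blast
    have C3: "\<forall>i \<in> honest n B. case cool_out G C n t l L M B A i of None \<Rightarrow> True | Some x \<Rightarrow> length x = l"
      using C1 by auto
    have C4: "\<forall>i \<in> honest n B. \<forall>j \<in> honest n B. cool_out G C n t l L M B A i = cool_out G C n t l L M B A j"
      using C1 by auto
    have C5: "real (cool_rounds ba_rounds G C n t l L M B A) \<le> K * real (t + 1)
     \<and> real (cool_bits ba_bits G C n t l L M B A) \<le> K * max (real n * real l) (real n * real t * log 2 (real t))"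
      using K h by blast
    show "(\<forall>i \<in> honest n B. case cool_out G C n t l L M B A i of None \<Rightarrow> True | Some x \<Rightarrow> length x = l)
     \<and> (\<forall>i \<in> honest n B. \<forall>j \<in> honest n B. cool_out G C n t l L M B A i = cool_out G C n t l L M B A j)
     \<and> (L \<notin> B \<longrightarrow> (\<forall>i \<in> honest n B. cool_out G C n t l L M B A i = Some M))
     \<and> real (cool_rounds ba_rounds G C n t l L M B A) \<le> K * real (t + 1)
     \<and> real (cool_bits ba_bits G C n t l L M B A) \<le> K * max (real n * real l) (real n * real t * log 2 (real t))"
      using C2 C3 C4 C5 by blast
  qed
qed

end
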